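(* For every graph $G$ and every minor-3-core $C$ of $G$, there is a minor-3-core of $G$ isomorphic to $C$ in which every vertex has the disjoint-paths property.
   Context: Graphs are simple and undirected. Contracting a vertex $u$ to a neighbour $v$ produces the graph with vertex set $V\setminus\{u\}$ and edge set consisting of all edges of $G$ not incident to $u$ together with all edges $\{u',v\}$ with $u'\neq v$ and $\{u',u\}\in E$. A minor of $G$ is a graph obtained from $G$ by vertex contractions and subgraph operations; thus the vertices of a minor are (non-contracted) vertices of $G$. A minor-3-core of $G$ is a minor $H$ of $G$ with minimum degree at least $3$ such that no minor of $G$ with minimum degree at least $3$ has more edges than $H$. For a minor-3-core $C$ of $G$, a vertex $v$ of $C$ has the disjoint-paths property for $C$ if, letting $u_1,\dots,u_{\Delta_C(v)}$ be the neighbours of $v$ in $C$, there are paths $\gamma_i$ in $G$ from $v$ to $u_i$ such that any two distinct paths $\gamma_i,\gamma_j$ share only the vertex $v$. *)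

theory Defs
  imports Main
begin

type_synonym 'a graph = "'a set \<times> 'a set set"

definition verts :: "'a graph \<Rightarrow> 'a set" where "verts G = fst G"
definition edges :: "'a graph \<Rightarrow> 'a set set" where "edges G = snd G"

definition graph :: "'a graph \<Rightarrow> bool" where
  "graph G \<longleftrightarrow> finite (verts G) \<and>
     (\<forall>e\<in>edges G. \<exists>u v. e = {u, v} \<and> u \<noteq> v \<and> u \<in> verts G \<and> v \<in> verts G)"

definition adj :: "'a graph \<Rightarrow> 'a \<Rightarrow> 'a \<Rightarrow> bool" where
  "adj G u v \<longleftrightarrow> {u, v} \<in> edges G"

definition neighbours :: "'a graph \<Rightarrow> 'a \<Rightarrow> 'a set" where
  "neighbours G v = {u. adj G v u}"

definition degree :: "'a graph \<Rightarrow> 'a \<Rightarrow> nat" where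
  "degree G v = card (neighbours G v)"

definition min_degree_ge :: "'a graph \<Rightarrow> nat \<Rightarrow> bool" where
  "min_degree_ge G k \<longleftrightarrow> (\<forall>v\<in>verts G. degree G v \<ge> k)"

definition contract :: "'a graph \<Rightarrow> 'a \<Rightarrow> 'a \<Rightarrow> 'a graph" where
  "contract G u v = (verts G - {u},
     {e \<in> edges G. u \<notin> e} \<union> {{u', v} | u'. u' \<noteq> v \<and> {u', u} \<in> edges G})"

definition subgraph :: "'a graph \<Rightarrow> 'a graph \<Rightarrow> bool" where
  "subgraph H G \<longleftrightarrow> graph H \<and> verts H \<subseteq> verts G \<and> edges H \<subseteq> edges G"

inductive minor :: "'a graph \<Rightarrow> 'a graph \<Rightarrow> bool" where
  refl: "graph G \<Longrightarrow> minor G G"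
| sub: "minor H G \<Longrightarrow> subgraph H' H \<Longrightarrow> minor H' G"
| contr: "minor H G \<Longrightarrow> adj H u v \<Longrightarrow> minor (contract H u v) G"

definition minor_3_core :: "'a graph \<Rightarrow> 'a graph \<Rightarrow> bool" where
  "minor_3_core G H \<longleftrightarrow> minor H G \<and> min_degree_ge H 3 \<and>
     (\<forall>H'. minor H' G \<and> min_degree_ge H' 3 \<longrightarrow> card (edges H') \<le> card (edges H))"

definition isomorphic :: "'a graph \<Rightarrow> 'b graph \<Rightarrow> bool" where
  "isomorphic G H \<longleftrightarrow> (\<exists>f. bij_betw f (verts G) (verts H) \<and>
     (\<forall>u\<in>verts G. \<forall>v\<in>verts G. adj G u v \<longleftrightarrow> adj H (f u) (f v)))"

definition is_path :: "'a graph \<Rightarrow> 'a list \<Rightarrow> bool" where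
  "is_path G p \<longleftrightarrow> p \<noteq> [] \<and> distinct p \<and> set p \<subseteq> verts G \<and>
     (\<forall>i. Suc i < length p \<longrightarrow> adj G (p ! i) (p ! Suc i))"

definition disjoint_paths_property :: "'a graph \<Rightarrow> 'a graph \<Rightarrow> 'a \<Rightarrow> bool" where
  "disjoint_paths_property G C v \<longleftrightarrow>
     (\<exists>\<gamma> :: 'a \<Rightarrow> 'a list.
        (\<forall>u\<in>neighbours C v. is_path G (\<gamma> u) \<and> hd (\<gamma> u) = v \<and> last (\<gamma> u) = u) \<and>
        (\<forall>u\<in>neighbours C v. \<forall>u'\<in>neighbours C v. u \<noteq> u' \<longrightarrow>
            set (\<gamma> u) \<inter> set (\<gamma> u') = {v}))"

end

theory Submission
  imports Defs
begin


definition grel :: "'a graph \<Rightarrow> 'a set \<Rightarrow> 'a \<Rightarrow> 'a \<Rightarrow> bool" where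
  "grel G A u v \<longleftrightarrow> u \<in> A \<and> v \<in> A \<and> adj G u v"
definition reach :: "'a graph \<Rightarrow> 'a set \<Rightarrow> 'a \<Rightarrow> 'a \<Rightarrow> bool" where
  "reach G A a b \<longleftrightarrow> a \<in> A \<and> (grel G A)\<^sup>*\<^sup>* a b"
definition conn :: "'a graph \<Rightarrow> 'a set \<Rightarrow> bool" where
  "conn G A \<longleftrightarrow> (\<forall>a\<in>A. \<forall>b\<in>A. reach G A a b)"

lemma adj_sym: "adj G u v \<Longrightarrow> adj G v u"
  by (simp add: adj_def insert_commute)

lemma graph_adj: "graph G \<Longrightarrow> adj G u v \<Longrightarrow> u \<noteq> v \<and> u \<in> verts G \<and> v \<in> verts G"
  unfolding graph_def adj_def by (metis doubleton_eq_iff)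

lemma graph_finite_edges: "graph G \<Longrightarrow> finite (edges G)"
proof -
  assume g: "graph G"
  have "edges G \<subseteq> Pow (verts G)" using g unfolding graph_def by auto
  moreover have "finite (Pow (verts G))" using g unfolding graph_def by auto
  ultimately show ?thesis by (rule finite_subset)
qed

lemma graph_finite_nb: "graph G \<Longrightarrow> finite (neighbours G v)"
proof -
  assume g: "graph G"
  have "neighbours G v \<subseteq> verts G" using graph_adj[OF g] unfolding neighbours_def by auto
  thus ?thesis using g unfolding graph_def by (auto intro: finite_subset)
qed

lemma reach_refl: "a \<in> A \<Longrightarrow> reach G A a a"
  by (simp add: reach_def)

lemma reach_in: "reach G A a b \<Longrightarrow> a \<in> A \<and> b \<in> A"
  unfolding reach_def
  by (metis grel_def rtranclp.cases)

lemma reach_step: "reach G A a b \<Longrightarrow> c \<in> A \<Longrightarrow> adj G b c \<Longrightarrow> reach G A a c"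
  unfolding reach_def using reach_in[unfolded reach_def]
  by (metis grel_def rtranclp.rtrancl_into_rtrancl)

lemma reach_edge: "a \<in> A \<Longrightarrow> b \<in> A \<Longrightarrow> adj G a b \<Longrightarrow> reach G A a b"
  using reach_refl reach_step by metis

lemma reach_trans: "reach G A a b \<Longrightarrow> reach G A b c \<Longrightarrow> reach G A a c"
  unfolding reach_def by auto

lemma grel_sym: "grel G A u v \<Longrightarrow> grel G A v u"
  unfolding grel_def using adj_sym by metis

lemma reach_sym: "reach G A a b \<Longrightarrow> reach G A b a"
proof -
  assume r: "reach G A a b"
  have "(grel G A)\<^sup>*\<^sup>* a b" using r by (simp add: reach_def)
  hence "(grel G A)\<^sup>*\<^sup>* b a"
    by (induction rule: rtranclp_induct) (auto intro: converse_rtranclp_into_rtranclp grel_sym)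
  thus ?thesis using reach_in[OF r] by (simp add: reach_def)
qed

lemma reach_gen:
  assumes "reach G A a b"
    and "\<And>u v. u \<in> A \<Longrightarrow> v \<in> A \<Longrightarrow> adj G u v \<Longrightarrow> reach G' A' u v"
    and "a \<in> A'"
  shows "reach G' A' a b"
proof -
  have "(grel G A)\<^sup>*\<^sup>* a b" using assms(1) by (simp add: reach_def)
  thus ?thesis
  proof (induction rule: rtranclp_induct)
    case base
    then show ?case using assms(3) by (simp add: reach_refl)
  next
    case (step y z)
    then show ?case using assms(2) reach_trans unfolding grel_def by metis
  qed
qed

lemma reach_mono: "reach G A a b \<Longrightarrow> A \<subseteq> A' \<Longrightarrow> reach G A' a b"
  by (rule reach_gen) (auto intro: reach_edge dest: reach_in)

lemma reach_mono_edges: "reach G A a b \<Longrightarrow> (\<And>u v. u \<in> A \<Longrightarrow> v \<in> A \<Longrightarrow> adj G u v \<Longrightarrow> adj G' u v) \<Longrightarrow> reach G' A a b"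
  by (rule reach_gen) (auto intro: reach_edge dest: reach_in)

lemma conn_union:
  assumes "conn G A" "conn G B" "a \<in> A" "b \<in> B" "adj G a b"
  shows "conn G (A \<union> B)"
proof -
  have ab: "reach G (A \<union> B) a b" using assms by (auto intro: reach_edge)
  have A: "\<And>p q. p \<in> A \<Longrightarrow> q \<in> A \<Longrightarrow> reach G (A \<union> B) p q"
    using assms(1) unfolding conn_def by (auto intro: reach_mono)
  have B: "\<And>p q. p \<in> B \<Longrightarrow> q \<in> B \<Longrightarrow> reach G (A \<union> B) p q"
    using assms(2) unfolding conn_def by (auto intro: reach_mono)
  show ?thesis unfolding conn_def
    by (metis A B Un_iff ab assms(3,4) reach_sym reach_trans)
qed

lemma reach_comp: "reach G A n z \<Longrightarrow> reach G {w. reach G A n w} n z"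
proof -
  assume r: "reach G A n z"
  have "(grel G A)\<^sup>*\<^sup>* n z" using r by (simp add: reach_def)
  thus ?thesis
  proof (induction rule: rtranclp_induct)
    case base
    then show ?case using reach_in[OF r] by (simp add: reach_refl)
  next
    case (step y z)
    have "reach G A n y" using step(1) reach_in[OF r] by (simp add: reach_def)
    hence "reach G A n z" using step(2) unfolding grel_def using reach_step by metis
    then show ?case using step reach_step unfolding grel_def by (metis mem_Collect_eq)
  qed
qed



lemma is_path_single[simp]: "is_path G [x] \<longleftrightarrow> x \<in> verts G"
  unfolding is_path_def by auto

lemma is_path_cons:
  "is_path G (x # y # xs) \<longleftrightarrow> x \<in> verts G \<and> adj G x y \<and> x \<notin> set (y#xs) \<and> is_path G (y#xs)"
proof
  assume p: "is_path G (x # y # xs)"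
  have "\<forall>i. Suc i < length (y#xs) \<longrightarrow> adj G ((y#xs) ! i) ((y#xs) ! Suc i)"
  proof (intro allI impI)
    fix i assume "Suc i < length (y#xs)"
    hence "Suc (Suc i) < length (x#y#xs)" by simp
    thus "adj G ((y#xs) ! i) ((y#xs) ! Suc i)" using p unfolding is_path_def by fastforce
  qed
  moreover have "adj G x y" using p unfolding is_path_def by fastforce
  ultimately show "x \<in> verts G \<and> adj G x y \<and> x \<notin> set (y#xs) \<and> is_path G (y#xs)"
    using p unfolding is_path_def by auto
next
  assume h: "x \<in> verts G \<and> adj G x y \<and> x \<notin> set (y#xs) \<and> is_path G (y#xs)"
  have "\<forall>i. Suc i < length (x#y#xs) \<longrightarrow> adj G ((x#y#xs) ! i) ((x#y#xs) ! Suc i)"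
  proof (intro allI impI)
    fix i assume i: "Suc i < length (x#y#xs)"
    show "adj G ((x#y#xs) ! i) ((x#y#xs) ! Suc i)"
    proof (cases i)
      case 0 then show ?thesis using h by simp
    next
      case (Suc j)
      then have "Suc j < length (y#xs)" using i by simp
      then show ?thesis using h Suc unfolding is_path_def by simp
    qed
  qed
  thus "is_path G (x # y # xs)" using h unfolding is_path_def by auto
qed

lemma is_path_cons2: "is_path G (x # q) \<Longrightarrow> q \<noteq> [] \<Longrightarrow> is_path G q \<and> adj G x (hd q) \<and> x \<notin> set q"
  by (cases q) (auto simp: is_path_cons)

lemma is_path_consI: "is_path G q \<Longrightarrow> x \<in> verts G \<Longrightarrow> adj G x (hd q) \<Longrightarrow> x \<notin> set q \<Longrightarrow> is_path G (x # q)"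
proof (cases q)
  case Nil
  then show "is_path G q \<Longrightarrow> ?thesis" by (simp add: is_path_def)
next
  case (Cons y ys)
  then show "is_path G q \<Longrightarrow> x \<in> verts G \<Longrightarrow> adj G x (hd q) \<Longrightarrow> x \<notin> set q \<Longrightarrow> ?thesis" by (simp add: is_path_cons)
qed

lemma is_path_append:
  "is_path G p \<Longrightarrow> is_path G q \<Longrightarrow> adj G (last p) (hd q) \<Longrightarrow> set p \<inter> set q = {} \<Longrightarrow> is_path G (p @ q)"
proof (induction p)
  case Nil
  then show ?case by (simp add: is_path_def)
next
  case (Cons x p)
  show ?case
  proof (cases p)
    case Nil
    have "is_path G (x # q)" using Cons.prems Nil by (intro is_path_consI) auto
    then show ?thesis using Nil by simp
  next
    case (Cons y p')
    note Cons2 = this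
    have ip: "is_path G p" "adj G x y" "x \<notin> set p" "x \<in> verts G"
      using Cons.prems(1) Cons2 by (auto simp: is_path_cons)
    have "is_path G (p @ q)" using Cons.IH[OF ip(1)] Cons.prems Cons2 by auto
    then show ?thesis using ip Cons.prems Cons2 by (auto simp: is_path_cons)
  qed
qed

lemma is_path_suffix: "is_path G (p1 @ q) \<Longrightarrow> q \<noteq> [] \<Longrightarrow> is_path G q"
proof (induction p1)
  case Nil then show ?case by simp
next
  case (Cons x p1)
  then show ?case using is_path_cons2[of G x "p1 @ q"] by auto
qed

lemma reach_path:
  assumes "reach G A a b" "A \<subseteq> verts G"
  shows "\<exists>p. is_path G p \<and> hd p = a \<and> last p = b \<and> set p \<subseteq> A"
proof -
  have "(grel G A)\<^sup>*\<^sup>* a b" using assms(1) by (simp add: reach_def)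
  moreover have "b \<in> A" using reach_in[OF assms(1)] by simp
  ultimately show ?thesis
  proof (induction rule: converse_rtranclp_induct)
    case base
    then show ?case using assms(2) by (intro exI[of _ "[b]"]) auto
  next
    case (step a a')
    then obtain p where p: "is_path G p" "hd p = a'" "last p = b" "set p \<subseteq> A" by auto
    have pne: "p \<noteq> []" using p(1) by (simp add: is_path_def)
    have aA: "a \<in> A" "adj G a a'" using step(1) by (auto simp: grel_def)
    show ?case
    proof (cases "a \<in> set p")
      case True
      then obtain p1 p2 where sp: "p = p1 @ a # p2" by (metis split_list)
      have "is_path G (a # p2)" using is_path_suffix p(1) sp by blast
      moreover have "last (a # p2) = b" using p(3) sp by simp
      ultimately show ?thesis using p(4) sp by (intro exI[of _ "a # p2"]) auto
    next
      case False
      have "is_path G (a # p)" using p pne aA assms(2) False by (intro is_path_consI) auto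
      then show ?thesis using p pne aA False by (intro exI[of _ "a # p"]) auto
    qed
  qed
qed

lemma path_reach: "is_path G p \<Longrightarrow> set p \<subseteq> A \<Longrightarrow> z \<in> set p \<Longrightarrow> reach G A (hd p) z"
proof (induction p arbitrary: z)
  case Nil then show ?case by simp
next
  case (Cons x p)
  show ?case
  proof (cases "p = []")
    case True then show ?thesis using Cons by (auto intro: reach_refl)
  next
    case False
    have h: "is_path G p" "adj G x (hd p)" using is_path_cons2[OF Cons.prems(1) False] by auto
    have xr: "reach G A x (hd p)" using Cons.prems(2) False h(2) by (intro reach_edge) (auto)
    show ?thesis
    proof (cases "z = x")
      case True then show ?thesis using Cons.prems by (auto intro: reach_refl)
    next
      case False
      then have "z \<in> set p" using Cons.prems by auto
      then have "reach G A (hd p) z" using Cons.IH h Cons.prems by auto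
      then show ?thesis using xr reach_trans by fastforce
    qed
  qed
qed

lemma is_path_mono: "is_path G p \<Longrightarrow> verts G \<subseteq> verts G' \<Longrightarrow> edges G \<subseteq> edges G' \<Longrightarrow> is_path G' p"
  unfolding is_path_def adj_def by blast



definition model :: "'a graph \<Rightarrow> 'a graph \<Rightarrow> ('a \<Rightarrow> 'a set) \<Rightarrow> bool" where
  "model G H B \<longleftrightarrow> (\<forall>x\<in>verts H. x \<in> B x \<and> B x \<subseteq> verts G \<and> conn G (B x)) \<and>
     (\<forall>x\<in>verts H. \<forall>y\<in>verts H. x \<noteq> y \<longrightarrow> B x \<inter> B y = {}) \<and>
     (\<forall>x y. {x,y} \<in> edges H \<longrightarrow> (\<exists>a\<in>B x. \<exists>b\<in>B y. adj G a b))"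

lemma verts_contract[simp]: "verts (contract G u v) = verts G - {u}"
  by (simp add: contract_def verts_def)
lemma edges_contract[simp]: "edges (contract G u v) = {e \<in> edges G. u \<notin> e} \<union> {{u', v} |u'. u' \<noteq> v \<and> {u', u} \<in> edges G}"
  by (simp add: contract_def edges_def)

lemma contract_graph:
  assumes g: "graph G" and a: "adj G u v"
  shows "graph (contract G u v)"
proof -
  have uv: "u \<noteq> v" "u \<in> verts G" "v \<in> verts G" using graph_adj[OF g a] by auto
  have f: "finite (verts (contract G u v))" using g by (simp add: graph_def)
  have "\<exists>ua va. e = {ua, va} \<and> ua \<noteq> va \<and> ua \<in> verts (contract G u v) \<and> va \<in> verts (contract G u v)"
    if e: "e \<in> edges (contract G u v)" for e
  proof (cases "e \<in> edges G \<and> u \<notin> e")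
    case True
    then obtain p q where "e = {p,q}" "p \<noteq> q" "p \<in> verts G" "q \<in> verts G" using g unfolding graph_def by blast
    then show ?thesis using True by auto
  next
    case False
    then obtain u' where u': "e = {u', v}" "u' \<noteq> v" "{u', u} \<in> edges G" using e by auto
    have "u' \<noteq> u" "u' \<in> verts G" using graph_adj[OF g, of u' u] u'(3) by (auto simp: adj_def)
    then show ?thesis using u' uv by auto
  qed
  then show ?thesis using f unfolding graph_def by blast
qed

lemma minor_graph: "minor H G \<Longrightarrow> graph H \<and> graph G"
proof (induction rule: minor.induct)
  case (refl G) then show ?case by simp
next
  case (sub H G H') then show ?case unfolding subgraph_def by simp
next
  case (contr H G u v) then show ?case using contract_graph[of H u v] by simp
qed

lemma minor_trans: "minor H K \<Longrightarrow> minor K G \<Longrightarrow> minor H G"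
proof (induction H K rule: minor.induct)
  case (refl K) then show ?case by simp
next
  case (sub H K H')
  show ?case using sub.IH[OF sub.prems] sub.hyps(2) by (rule minor.sub)
next
  case (contr H K u v)
  show ?case using contr.IH[OF contr.prems] contr.hyps(2) by (rule minor.contr)
qed

lemma subgraph_minor: "graph G \<Longrightarrow> subgraph H G \<Longrightarrow> minor H G"
  by (rule minor.sub[OF minor.refl])

lemma modelD:
  assumes "model G H B"
  shows "\<And>x. x \<in> verts H \<Longrightarrow> x \<in> B x"
    "\<And>x. x \<in> verts H \<Longrightarrow> B x \<subseteq> verts G"
    "\<And>x. x \<in> verts H \<Longrightarrow> conn G (B x)"
    "\<And>x y. x \<in> verts H \<Longrightarrow> y \<in> verts H \<Longrightarrow> x \<noteq> y \<Longrightarrow> B x \<inter> B y = {}"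
    "\<And>x y. {x,y} \<in> edges H \<Longrightarrow> \<exists>a\<in>B x. \<exists>b\<in>B y. adj G a b"
  using assms unfolding model_def by blast+

lemma modelI:
  assumes "\<And>x. x \<in> verts H \<Longrightarrow> x \<in> B x"
    "\<And>x. x \<in> verts H \<Longrightarrow> B x \<subseteq> verts G"
    "\<And>x. x \<in> verts H \<Longrightarrow> conn G (B x)"
    "\<And>x y. x \<in> verts H \<Longrightarrow> y \<in> verts H \<Longrightarrow> x \<noteq> y \<Longrightarrow> B x \<inter> B y = {}"
    "\<And>x y. {x,y} \<in> edges H \<Longrightarrow> \<exists>a\<in>B x. \<exists>b\<in>B y. adj G a b"
  shows "model G H B"
  using assms unfolding model_def by blast

lemma model_contract:
  assumes B: "model G H B" and gH: "graph H" and a: "adj H u v"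
  shows "model G (contract H u v) (B(v := B v \<union> B u))"
proof -
  have uv: "u \<noteq> v" "u \<in> verts H" "v \<in> verts H" using graph_adj[OF gH a] by auto
  define B' where "B' = B(v := B v \<union> B u)"
  have sup: "\<And>w. B w \<subseteq> B' w" unfolding B'_def by auto
  obtain a b where ab: "a \<in> B u" "b \<in> B v" "adj G a b"
    using modelD(5)[OF B, of u v] a unfolding adj_def by auto
  have "model G (contract H u v) B'"
  proof (rule modelI)
    fix x assume x: "x \<in> verts (contract H u v)"
    hence xH: "x \<in> verts H" "x \<noteq> u" by auto
    show "x \<in> B' x" using sup modelD(1)[OF B xH(1)] by auto
    show "B' x \<subseteq> verts G" using modelD(2)[OF B] xH uv unfolding B'_def by auto
    show "conn G (B' x)"
    proof (cases "x = v")
      case True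
      have "conn G (B u \<union> B v)" using modelD(3)[OF B] uv by (intro conn_union[OF _ _ ab]) auto
      then show ?thesis using True by (simp add: B'_def Un_commute)
    next
      case False
      then show ?thesis using modelD(3)[OF B xH(1)] unfolding B'_def by simp
    qed
  next
    fix x y assume x: "x \<in> verts (contract H u v)" and y: "y \<in> verts (contract H u v)" and xy: "x \<noteq> y"
    hence xH: "x \<in> verts H" "x \<noteq> u" "y \<in> verts H" "y \<noteq> u" by auto
    note d = modelD(4)[OF B]
    show "B' x \<inter> B' y = {}"
    proof (cases "x = v")
      case True
      then show ?thesis unfolding B'_def using d[of x y] d[of u y] xH uv xy by (simp add: Int_Un_distrib2)
    next
      case False
      then show ?thesis
      proof (cases "y = v")
        case True
        then show ?thesis unfolding B'_def using d[of x y] d[of u x] xH uv xy \<open>x \<noteq> v\<close> by (simp add: Int_Un_distrib Int_commute)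
      next
        case False
        then show ?thesis unfolding B'_def using d[of x y] xH xy \<open>x \<noteq> v\<close> by simp
      qed
    qed
  next
    fix x y assume e: "{x, y} \<in> edges (contract H u v)"
    show "\<exists>a\<in>B' x. \<exists>b\<in>B' y. adj G a b"
    proof (cases "{x,y} \<in> edges H \<and> u \<notin> {x,y}")
      case True
      then obtain a b where "a \<in> B x" "b \<in> B y" "adj G a b" using modelD(5)[OF B, of x y] by auto
      then show ?thesis using sup by blast
    next
      case False
      then obtain u' where u': "{x,y} = {u', v}" "{u', u} \<in> edges H" using e by auto
      obtain a b where ab2: "a \<in> B u'" "b \<in> B u" "adj G a b" using modelD(5)[OF B u'(2)] by auto
      have bv: "b \<in> B' v" unfolding B'_def using ab2 by auto
      have au: "a \<in> B' u'" using sup ab2 by blast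
      have "(x = u' \<and> y = v) \<or> (x = v \<and> y = u')" using u'(1) by (simp add: doubleton_eq_iff)
      then show ?thesis using ab2(3) adj_sym[OF ab2(3)] bv au by auto
    qed
  qed
  then show ?thesis unfolding B'_def .
qed

lemma minor_model: "minor H G \<Longrightarrow> \<exists>B. model G H B"
proof (induction rule: minor.induct)
  case (refl G)
  have c: "conn G {x}" for x by (simp add: conn_def reach_refl)
  have "model G G (\<lambda>x. {x})"
    by (rule modelI) (auto simp: adj_def c)
  then show ?case by blast
next
  case (sub H G H')
  from sub.IH obtain B where B: "model G H B" by blast
  have s: "verts H' \<subseteq> verts H" "edges H' \<subseteq> edges H" using sub.hyps(2) by (auto simp: subgraph_def)
  have "model G H' B"
  proof (rule modelI)
    show "\<And>x. x \<in> verts H' \<Longrightarrow> x \<in> B x" using modelD(1)[OF B] s by auto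
    show "\<And>x. x \<in> verts H' \<Longrightarrow> B x \<subseteq> verts G" using modelD(2)[OF B] s by auto
    show "\<And>x. x \<in> verts H' \<Longrightarrow> conn G (B x)" using modelD(3)[OF B] s by auto
    show "\<And>x y. x \<in> verts H' \<Longrightarrow> y \<in> verts H' \<Longrightarrow> x \<noteq> y \<Longrightarrow> B x \<inter> B y = {}" using modelD(4)[OF B] s by auto
    show "\<And>x y. {x,y} \<in> edges H' \<Longrightarrow> \<exists>a\<in>B x. \<exists>b\<in>B y. adj G a b" using modelD(5)[OF B] s by auto
  qed
  then show ?case by blast
next
  case (contr H G u v)
  from contr.IH obtain B where B: "model G H B" by blast
  have gH: "graph H" using minor_graph[OF contr.hyps(1)] by simp
  show ?case using model_contract[OF B gH contr.hyps(2)] by blast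
qed



lemma adj_contract_keep: "adj G p q \<Longrightarrow> p \<noteq> u \<Longrightarrow> q \<noteq> u \<Longrightarrow> adj (contract G u x) p q"
  unfolding adj_def by simp

lemma adj_contract_new: "adj G p u \<Longrightarrow> p \<noteq> x \<Longrightarrow> adj (contract G u x) x p"
proof -
  assume a: "adj G p u" "p \<noteq> x"
  have "{p, x} \<in> edges (contract G u x)" using a unfolding adj_def by auto
  thus ?thesis unfolding adj_def by (simp add: insert_commute)
qed

lemma reach_first:
  assumes "reach G A a b" "a \<noteq> b"
  shows "\<exists>c\<in>A. adj G a c"
proof -
  have "(grel G A)\<^sup>*\<^sup>* a b" using assms(1) by (simp add: reach_def)
  then show ?thesis using assms(2)
    by (cases rule: converse_rtranclpE) (auto simp: grel_def)
qed

lemma conn_contract_self: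
  assumes g: "graph G" and c: "conn G S" and xS: "x \<in> S" and uS: "u \<in> S" and ux: "u \<noteq> x"
  shows "conn (contract G u x) (S - {u})"
proof -
  let ?G' = "contract G u x"
  have claim: "z \<noteq> u \<Longrightarrow> reach ?G' (S - {u}) x z" if r: "reach G S x z" for z
  proof -
    have "(grel G S)\<^sup>*\<^sup>* x z" using r by (simp add: reach_def)
    then show "z \<noteq> u \<Longrightarrow> reach ?G' (S - {u}) x z"
    proof (induction rule: rtranclp_induct)
      case base
      then show ?case using xS ux by (simp add: reach_refl)
    next
      case (step y z)
      have yz: "y \<in> S" "z \<in> S" "adj G y z" using step.hyps(2) by (auto simp: grel_def)
      show ?case
      proof (cases "y = u")
        case True
        show ?thesis
        proof (cases "z = x")
          case True then show ?thesis using xS ux by (simp add: reach_refl)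
        next
          case False
          have "adj ?G' x z" using adj_contract_new[OF adj_sym[OF yz(3)[unfolded \<open>y = u\<close>]] False] .
          moreover have "x \<in> S - {u}" "z \<in> S - {u}" using xS ux yz step.prems by auto
          ultimately show ?thesis using reach_edge by metis
        qed
      next
        case False
        have "reach ?G' (S - {u}) x y" using step.IH False by simp
        moreover have "adj ?G' y z" using adj_contract_keep[OF yz(3) False step.prems] .
        moreover have "z \<in> S - {u}" using yz step.prems by auto
        ultimately show ?thesis using reach_step by metis
      qed
    qed
  qed
  show ?thesis unfolding conn_def
  proof (intro ballI)
    fix a b assume a: "a \<in> S - {u}" and b: "b \<in> S - {u}"
    have "reach G S x a" using c xS a unfolding conn_def by auto
    then have xa: "reach ?G' (S - {u}) x a" using claim a by simp
    have "reach G S x b" using c xS b unfolding conn_def by auto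
    then have xb: "reach ?G' (S - {u}) x b" using claim b by simp
    show "reach ?G' (S - {u}) a b" using reach_trans[OF reach_sym[OF xa] xb] .
  qed
qed

lemma model_minor:
  assumes "graph G" "graph H" "model G H B"
  shows "minor H G"
  using assms
proof (induction "\<Sum>x\<in>verts H. card (B x)" arbitrary: G B rule: less_induct)
  case less
  note gG = less.prems(1) and gH = less.prems(2) and B = less.prems(3)
  have finH: "finite (verts H)" using gH by (simp add: graph_def)
  show ?case
  proof (cases "\<forall>x\<in>verts H. B x = {x}")
    case True
    have "subgraph H G" unfolding subgraph_def
    proof (intro conjI)
      show "graph H" by fact
      show "verts H \<subseteq> verts G" using modelD(1,2)[OF B] by blast
      show "edges H \<subseteq> edges G"
      proof
        fix e assume e: "e \<in> edges H"
        then obtain p q where pq: "e = {p,q}" "p \<in> verts H" "q \<in> verts H" using gH unfolding graph_def by blast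
        then obtain a b where "a \<in> B p" "b \<in> B q" "adj G a b" using modelD(5)[OF B, of p q] e by auto
        then show "e \<in> edges G" using True pq unfolding adj_def by auto
      qed
    qed
    then show ?thesis by (rule subgraph_minor[OF gG])
  next
    case False
    then obtain x where x: "x \<in> verts H" "B x \<noteq> {x}" by blast
    have xB: "x \<in> B x" using modelD(1)[OF B x(1)] .
    then obtain u0 where u0: "u0 \<in> B x" "u0 \<noteq> x" using x(2) by blast
    have "reach G (B x) x u0" using modelD(3)[OF B x(1)] xB u0 unfolding conn_def by blast
    then obtain u where u: "u \<in> B x" "adj G x u" using reach_first[OF _ u0(2)[symmetric]] by blast
    have ux: "u \<noteq> x" using graph_adj[OF gG u(2)] by auto
    define G' where "G' = contract G u x"
    define B' where "B' = B(x := B x - {u})"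
    have gG': "graph G'" unfolding G'_def using contract_graph[OF gG adj_sym[OF u(2)]] .
    note d = modelD(4)[OF B]
    have uny: "u \<notin> B y" if "y \<in> verts H" "y \<noteq> x" for y using d[of x y] that x(1) u(1) by auto
    have mB': "model G' H B'"
    proof (rule modelI)
      fix y assume y: "y \<in> verts H"
      show "y \<in> B' y" using modelD(1)[OF B y] ux unfolding B'_def by auto
      show "B' y \<subseteq> verts G'" using modelD(2)[OF B y] uny[OF y] unfolding B'_def G'_def by auto
      show "conn G' (B' y)"
      proof (cases "y = x")
        case True
        then show ?thesis unfolding B'_def G'_def
          using conn_contract_self[OF gG modelD(3)[OF B x(1)] xB u(1) ux] by simp
      next
        case False
        have "\<forall>a\<in>B y. \<forall>b\<in>B y. reach G' (B y) a b"
        proof (intro ballI)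
          fix a b assume "a \<in> B y" "b \<in> B y"
          then have "reach G (B y) a b" using modelD(3)[OF B y] unfolding conn_def by blast
          then show "reach G' (B y) a b"
          proof (rule reach_mono_edges)
            fix p q assume "p \<in> B y" "q \<in> B y" "adj G p q"
            then show "adj G' p q" unfolding G'_def using adj_contract_keep uny[OF y False] by metis
          qed
        qed
        then show ?thesis using False unfolding B'_def conn_def by simp
      qed
    next
      fix y z assume "y \<in> verts H" "z \<in> verts H" "y \<noteq> z"
      then show "B' y \<inter> B' z = {}" using d[of y z] unfolding B'_def by auto
    next
      fix p q assume e: "{p, q} \<in> edges H"
      have pq: "p \<in> verts H" "q \<in> verts H" "p \<noteq> q" using graph_adj[OF gH, of p q] e by (auto simp: adj_def)
      obtain a b where ab: "a \<in> B p" "b \<in> B q" "adj G a b" using modelD(5)[OF B e] by auto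
      show "\<exists>a\<in>B' p. \<exists>b\<in>B' q. adj G' a b"
      proof (cases "a = u")
        case True
        have px: "p = x" using d[of p x] pq x(1) ab(1) u(1) True by auto
        have bx: "b \<notin> B x" using d[of q x] pq px ab(2) by auto
        have "b \<noteq> x" using bx xB by auto
        then have "adj G' x b" unfolding G'_def
          using adj_contract_new[OF adj_sym[OF ab(3)[unfolded True]]] by simp
        moreover have "x \<in> B' p" using px xB ux unfolding B'_def by simp
        moreover have "b \<in> B' q" using ab(2) bx u(1) px pq unfolding B'_def by auto
        ultimately show ?thesis by blast
      next
        case False
        show ?thesis
        proof (cases "b = u")
          case True
          have qx: "q = x" using d[of q x] pq x(1) ab(2) u(1) True by auto
          have ax: "a \<notin> B x" using d[of p x] pq qx ab(1) by auto
          have "a \<noteq> x" using ax xB by auto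
          then have "adj G' x a" unfolding G'_def
            using adj_contract_new[OF ab(3)[unfolded True]] by simp
          then have "adj G' a x" by (rule adj_sym)
          moreover have "x \<in> B' q" using qx xB ux unfolding B'_def by simp
          moreover have "a \<in> B' p" using ab(1) ax u(1) qx pq unfolding B'_def by auto
          ultimately show ?thesis by blast
        next
          case False
          have "adj G' a b" unfolding G'_def using adj_contract_keep[OF ab(3) \<open>a \<noteq> u\<close> False] .
          moreover have "a \<in> B' p" "b \<in> B' q" using ab \<open>a \<noteq> u\<close> False unfolding B'_def by auto
          ultimately show ?thesis by blast
        qed
      qed
    qed
    have finBx: "finite (B x)" using modelD(2)[OF B x(1)] gG unfolding graph_def by (auto intro: finite_subset)
    have lt: "(\<Sum>y\<in>verts H. card (B' y)) < (\<Sum>y\<in>verts H. card (B y))"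
    proof (rule sum_strict_mono_ex1[OF finH])
      show "\<forall>y\<in>verts H. card (B' y) \<le> card (B y)" unfolding B'_def
        using finBx by (auto intro: card_mono)
      have "card (B' x) < card (B x)" unfolding B'_def using card_Diff1_less[OF finBx u(1)] by simp
      then show "\<exists>y\<in>verts H. card (B' y) < card (B y)" using x(1) by blast
    qed
    have "minor H G'" using less.hyps[OF lt gG' gH mB'] .
    moreover have "minor G' G" unfolding G'_def using minor.contr[OF minor.refl[OF gG] adj_sym[OF u(2)]] .
    ultimately show ?thesis by (rule minor_trans)
  qed
qed



definition delE :: "'a graph \<Rightarrow> 'a set \<Rightarrow> 'a graph" where
  "delE G e = (verts G, edges G - {e})"

definition side :: "'a graph \<Rightarrow> 'a set \<Rightarrow> 'a \<Rightarrow> 'a \<Rightarrow> 'a set" where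
  "side G S c n = {z. reach G (S - {c}) n z}"

definition labs :: "'b set \<Rightarrow> ('a \<Rightarrow> 'b \<Rightarrow> bool) \<Rightarrow> 'a set \<Rightarrow> 'b set" where
  "labs L T P = {l\<in>L. \<exists>s\<in>P. T s l}"

lemma adj_delE: "adj G p q \<Longrightarrow> {p,q} \<noteq> e \<Longrightarrow> adj (delE G e) p q"
  unfolding adj_def delE_def edges_def by simp

lemma reach_avoid:
  assumes "reach G A p q" "c \<notin> A \<or> n \<notin> A"
  shows "reach (delE G {c,n}) A p q"
  using assms(1)
proof (rule reach_mono_edges)
  fix u v assume "u \<in> A" "v \<in> A" "adj G u v"
  moreover have "{u,v} \<noteq> {c,n}" using assms(2) \<open>u \<in> A\<close> \<open>v \<in> A\<close> by (auto simp: doubleton_eq_iff)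
  ultimately show "adj (delE G {c, n}) u v" using adj_delE by metis
qed

lemma labs_mono: "P \<subseteq> Q \<Longrightarrow> labs L T P \<subseteq> labs L T Q"
  unfolding labs_def by blast

context
  fixes G :: "'a graph" and S :: "'a set"
  assumes gG: "graph G" and SV: "S \<subseteq> verts G" and cS: "conn G S"
    and br: "\<And>a b. a \<in> S \<Longrightarrow> b \<in> S \<Longrightarrow> adj G a b \<Longrightarrow> \<not> reach (delE G {a,b}) S a b"
begin

lemma side_sub: "side G S c n \<subseteq> S - {c}"
  unfolding side_def using reach_in by fastforce

lemma n_side: "n \<in> S - {c} \<Longrightarrow> n \<in> side G S c n"
  unfolding side_def by (simp add: reach_refl)

lemma side_closed: "z \<in> side G S c n \<Longrightarrow> w \<in> S - {c} \<Longrightarrow> adj G z w \<Longrightarrow> w \<in> side G S c n"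
  unfolding side_def using reach_step by fastforce

lemma side_conn: "conn G (side G S c n)"
  unfolding conn_def
proof (intro ballI)
  fix a b assume a: "a \<in> side G S c n" and b: "b \<in> side G S c n"
  have "reach G (side G S c n) n a" using a reach_comp unfolding side_def by fastforce
  moreover have "reach G (side G S c n) n b" using b reach_comp unfolding side_def by fastforce
  ultimately show "reach G (side G S c n) a b" using reach_sym reach_trans by metis
qed

lemma compl_conn:
  assumes cS': "c \<in> S"
  shows "conn G (S - side G S c n)"
proof -
  let ?P = "side G S c n"
  let ?Q = "S - ?P"
  have cQ: "c \<in> ?Q" using side_sub cS' by auto
  have main: "reach G ?Q c z" if zQ: "z \<in> ?Q" for z
  proof -
    have "reach G S c z" using cS cS' zQ unfolding conn_def by auto
    then have cz: "(grel G S)\<^sup>*\<^sup>* c z" by (simp add: reach_def)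
    have gen: "(a0 \<notin> ?P \<longrightarrow> reach G ?Q a0 z) \<and> (a0 \<in> ?P \<longrightarrow> reach G ?Q c z)"
      if "(grel G S)\<^sup>*\<^sup>* a0 z" for a0
    using that proof (induction rule: converse_rtranclp_induct)
      case base
      then show ?case using zQ by (simp add: reach_refl)
    next
      case (step a a')
      have aa: "a \<in> S" "a' \<in> S" "adj G a a'" using step.hyps(1) by (auto simp: grel_def)
      show ?case
      proof (intro conjI impI)
        assume aP: "a \<notin> ?P"
        show "reach G ?Q a z"
        proof (cases "a' \<in> ?P")
          case True
          have "a = c"
          proof (rule ccontr)
            assume "a \<noteq> c"
            then have "a \<in> ?P" using side_closed[OF True _ adj_sym[OF aa(3)]] aa(1) by blast
            then show False using aP by simp
          qed
          then show ?thesis using step.IH True by simp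
        next
          case False
          have "reach G ?Q a' z" using step.IH False by simp
          moreover have "reach G ?Q a a'" using aa aP False by (intro reach_edge) auto
          ultimately show ?thesis using reach_trans by metis
        qed
      next
        assume aP: "a \<in> ?P"
        show "reach G ?Q c z"
        proof (cases "a' \<in> ?P")
          case True
          then show ?thesis using step.IH by simp
        next
          case False
          have "a' = c"
          proof (rule ccontr)
            assume "a' \<noteq> c"
            then have "a' \<in> ?P" using side_closed[OF aP _ aa(3)] aa(2) by blast
            then show False using False by simp
          qed
          then show ?thesis using step.IH False by simp
        qed
      qed
    qed
    show ?thesis using gen[OF cz] by blast
  qed
  show ?thesis unfolding conn_def
  proof (intro ballI)
    fix a b assume "a \<in> ?Q" "b \<in> ?Q"
    then have "reach G ?Q c a" "reach G ?Q c b" using main by auto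
    then show "reach G ?Q a b" using reach_sym reach_trans by metis
  qed
qed

lemma adj_ne: "adj G a b \<Longrightarrow> a \<noteq> b"
  using graph_adj[OF gG] by blast

lemma side_disj:
  assumes "c \<in> S" "m \<in> S" "m' \<in> S" "adj G c m" "adj G c m'" "m \<noteq> m'"
  shows "side G S c m \<inter> side G S c m' = {}"
proof (rule ccontr)
  assume "side G S c m \<inter> side G S c m' \<noteq> {}"
  then obtain z where z1: "reach G (S - {c}) m z" and z2: "reach G (S - {c}) m' z" unfolding side_def by auto
  have r: "reach G (S - {c}) m' m" using reach_trans[OF z2 reach_sym[OF z1]] .
  have "reach (delE G {c,m}) (S - {c}) m' m" using reach_avoid[OF r] by simp
  then have r2: "reach (delE G {c,m}) S m' m" by (rule reach_mono) auto
  have "{c,m'} \<noteq> {c,m}" using assms(6) adj_ne[OF assms(5)] by (auto simp: doubleton_eq_iff)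
  then have "adj (delE G {c,m}) c m'" using adj_delE[OF assms(5)] by simp
  then have cm': "reach (delE G {c,m}) S c m'" using assms by (intro reach_edge) auto
  have "reach (delE G {c,m}) S c m" using reach_trans[OF cm' r2] .
  then show False using br[OF assms(1,2,4)] by simp
qed

lemma side_next:
  assumes "c \<in> S" "n \<in> S" "m \<in> S" "adj G c n" "adj G n m" "m \<noteq> c"
  shows "side G S n m \<subset> side G S c n"
proof -
  have cn: "c \<noteq> n" using adj_ne[OF assms(4)] .
  have cnot: "c \<notin> side G S n m"
  proof
    assume "c \<in> side G S n m"
    then have r: "reach G (S - {n}) m c" unfolding side_def by simp
    have "reach (delE G {n,m}) (S - {n}) m c" using reach_avoid[OF r] by simp
    then have r2: "reach (delE G {n,m}) S m c" by (rule reach_mono) auto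
    have "{c,n} \<noteq> {n,m}" using assms(6) cn by (auto simp: doubleton_eq_iff)
    then have "adj (delE G {n,m}) c n" using adj_delE[OF assms(4)] by simp
    then have cn2: "reach (delE G {n,m}) S c n" using assms by (intro reach_edge) auto
    have "reach (delE G {n,m}) S m n" using reach_trans[OF r2 cn2] .
    then have "reach (delE G {n,m}) S n m" by (rule reach_sym)
    then show False using br[OF assms(2,3,5)] by simp
  qed
  have sub: "side G S n m \<subseteq> side G S c n"
  proof
    fix z assume z: "z \<in> side G S n m"
    then have "reach G (side G S n m) m z" unfolding side_def using reach_comp by fastforce
    moreover have "side G S n m \<subseteq> S - {c}" using side_sub cnot by blast
    ultimately have r: "reach G (S - {c}) m z" by (rule reach_mono)
    have "reach G (S - {c}) n m" using assms cn by (intro reach_edge) auto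
    then show "z \<in> side G S c n" unfolding side_def using reach_trans[OF _ r] by blast
  qed
  have "n \<in> side G S c n" using n_side assms cn by auto
  moreover have "n \<notin> side G S n m" using side_sub by blast
  ultimately show ?thesis using sub by blast
qed

lemma side_back:
  assumes "c \<in> S" "n \<in> S" "adj G c n"
  shows "side G S n c \<subseteq> S - side G S c n"
proof
  fix z assume z: "z \<in> side G S n c"
  have zS: "z \<in> S" using z side_sub by blast
  show "z \<in> S - side G S c n"
  proof (rule ccontr)
    assume "z \<notin> S - side G S c n"
    then have r1: "reach G (S - {c}) n z" using zS unfolding side_def by simp
    have r2: "reach G (S - {n}) c z" using z unfolding side_def by simp
    have a1: "reach (delE G {c,n}) S n z" using reach_avoid[OF r1] by (rule reach_mono) auto
    have a2: "reach (delE G {c,n}) S c z" using reach_avoid[OF r2] by (rule reach_mono) auto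
    have "reach (delE G {c,n}) S c n" using reach_trans[OF a2 reach_sym[OF a1]] .
    then show False using br[OF assms] by simp
  qed
qed


context
  fixes L :: "'b set" and T :: "'a \<Rightarrow> 'b \<Rightarrow> bool"
  assumes finL: "finite L" and cardL: "3 \<le> card L" and cover: "\<And>l. l \<in> L \<Longrightarrow> \<exists>s\<in>S. T s l"
begin

lemma core:
  "(\<exists>P1 P2. P1 \<union> P2 = S \<and> P1 \<inter> P2 = {} \<and> conn G P1 \<and> conn G P2 \<and> (\<exists>a\<in>P1. \<exists>b\<in>P2. adj G a b) \<and>
      2 \<le> card (labs L T P1) \<and> 2 \<le> card (labs L T P2)) \<or>
   (\<exists>c\<in>S. \<exists>\<pi>. \<forall>l\<in>L. is_path G (\<pi> l) \<and> hd (\<pi> l) = c \<and> set (\<pi> l) \<subseteq> S \<and> T (last (\<pi> l)) l \<and>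
      (\<forall>l'\<in>L. l \<noteq> l' \<longrightarrow> set (\<pi> l) \<inter> set (\<pi> l') = {c}))"
proof (cases "\<exists>c n. c \<in> S \<and> n \<in> S \<and> adj G c n \<and> 2 \<le> card (labs L T (side G S c n)) \<and> 2 \<le> card (labs L T (S - side G S c n))")
  case True
  then obtain c n where cn: "c \<in> S" "n \<in> S" "adj G c n" "2 \<le> card (labs L T (side G S c n))" "2 \<le> card (labs L T (S - side G S c n))"
    by blast
  have cn': "c \<noteq> n" using adj_ne[OF cn(3)] .
  have s1: "side G S c n \<subseteq> S - {c}" by (rule side_sub)
  have nP: "n \<in> side G S c n" using n_side cn cn' by auto
  have cP: "c \<in> S - side G S c n" using s1 cn by auto
  have "side G S c n \<union> (S - side G S c n) = S \<and> side G S c n \<inter> (S - side G S c n) = {} \<and>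
     conn G (side G S c n) \<and> conn G (S - side G S c n) \<and>
     (\<exists>a\<in>side G S c n. \<exists>b\<in>S - side G S c n. adj G a b) \<and>
     2 \<le> card (labs L T (side G S c n)) \<and> 2 \<le> card (labs L T (S - side G S c n))"
  proof (intro conjI)
    show "side G S c n \<union> (S - side G S c n) = S" using s1 by auto
    show "side G S c n \<inter> (S - side G S c n) = {}" by auto
    show "conn G (side G S c n)" by (rule side_conn)
    show "conn G (S - side G S c n)" using compl_conn cn(1) by blast
    show "\<exists>a\<in>side G S c n. \<exists>b\<in>S - side G S c n. adj G a b" using nP cP adj_sym[OF cn(3)] by blast
  qed (use cn in auto)
  then show ?thesis by blast
next
  case False
  have nosplit: "card (labs L T (S - side G S c n)) \<le> 1"
    if "c \<in> S" "n \<in> S" "adj G c n" "2 \<le> card (labs L T (side G S c n))" for c n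
  proof -
    have "\<not> 2 \<le> card (labs L T (S - side G S c n))" using False that by blast
    then show ?thesis by simp
  qed
  have finlab: "finite (labs L T P)" for P using finL unfolding labs_def by simp
  have finS: "finite S" using SV gG unfolding graph_def by (auto intro: finite_subset)
  obtain c where cS0: "c \<in> S" and sink: "\<And>m. m \<in> S \<Longrightarrow> adj G c m \<Longrightarrow> card (labs L T (side G S c m)) \<le> 1"
  proof (cases "\<exists>c n. c \<in> S \<and> n \<in> S \<and> adj G c n \<and> 2 \<le> card (labs L T (side G S c n))")
    case True
    then obtain c0 n0 where h0: "c0 \<in> S \<and> n0 \<in> S \<and> adj G c0 n0 \<and> 2 \<le> card (labs L T (side G S c0 n0))" by blast
    define H where "H = (\<lambda>p. fst p \<in> S \<and> snd p \<in> S \<and> adj G (fst p) (snd p) \<and> 2 \<le> card (labs L T (side G S (fst p) (snd p))))"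
    have "H (c0, n0)" using h0 unfolding H_def by simp
    then obtain p where Hp: "H p" and pmin: "\<forall>q. H q \<longrightarrow> card (side G S (fst p) (snd p)) \<le> card (side G S (fst q) (snd q))"
      using ex_has_least_nat[of H "(c0,n0)" "\<lambda>p. card (side G S (fst p) (snd p))"] by auto
    obtain c n where p: "p = (c, n)" by (cases p)
    have hcn: "c \<in> S" "n \<in> S" "adj G c n" "2 \<le> card (labs L T (side G S c n))" using Hp p unfolding H_def by auto
    show thesis
    proof (rule that[of n])
      show "n \<in> S" by (rule hcn(2))
      fix m assume m: "m \<in> S" "adj G n m"
      show "card (labs L T (side G S n m)) \<le> 1"
      proof (cases "m = c")
        case True
        have "labs L T (side G S n c) \<subseteq> labs L T (S - side G S c n)"
          by (rule labs_mono) (rule side_back[OF hcn(1-3)])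
        then have "card (labs L T (side G S n c)) \<le> card (labs L T (S - side G S c n))"
          by (rule card_mono[OF finlab])
        then show ?thesis using nosplit[OF hcn] True by simp
      next
        case False
        have ps: "side G S n m \<subset> side G S c n" by (rule side_next[OF hcn(1,2) m(1) hcn(3) m(2) False])
        have "finite (side G S c n)" by (rule finite_subset[OF side_sub]) (simp add: finS)
        then have lt: "card (side G S n m) < card (side G S c n)" using ps by (rule psubset_card_mono)
        show ?thesis
        proof (rule ccontr)
          assume "\<not> card (labs L T (side G S n m)) \<le> 1"
          then have "2 \<le> card (labs L T (side G S n m))" by simp
          then have Hnm: "H (n, m)" unfolding H_def using hcn(2) m by simp
          have "card (side G S (fst p) (snd p)) \<le> card (side G S (fst (n,m)) (snd (n,m)))" using pmin Hnm by simp
          then have "card (side G S c n) \<le> card (side G S n m)" using p by simp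
          then show False using lt by simp
        qed
      qed
    qed
  next
    case False
    have "L \<noteq> {}" using cardL by auto
    then obtain l where "l \<in> L" by blast
    then obtain s where s: "s \<in> S" using cover by blast
    show thesis
    proof (rule that[of s])
      show "s \<in> S" by fact
      fix m assume "m \<in> S" "adj G s m"
      then have "\<not> 2 \<le> card (labs L T (side G S s m))" using False s by blast
      then show "card (labs L T (side G S s m)) \<le> 1" by simp
    qed
  qed
  have cV: "c \<in> verts G" using cS0 SV by auto
  have ex: "\<exists>p. is_path G p \<and> hd p = c \<and> set p \<subseteq> S \<and> T (last p) l \<and>
      (p = [c] \<or> (\<exists>m q. p = c # q \<and> m \<in> S \<and> adj G c m \<and> q \<noteq> [] \<and> hd q = m \<and> set q \<subseteq> side G S c m))"
    if l: "l \<in> L" for l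
  proof (cases "T c l")
    case True
    have "is_path G [c] \<and> hd [c] = c \<and> set [c] \<subseteq> S \<and> T (last [c]) l" using cV cS0 True by simp
    then show ?thesis by blast
  next
    case False
    obtain s where s: "s \<in> S" "T s l" using cover l by blast
    have sc: "s \<noteq> c" using s False by auto
    have "reach G S c s" using cS cS0 s unfolding conn_def by blast
    then obtain p where p: "is_path G p" "hd p = c" "last p = s" "set p \<subseteq> S" using reach_path[OF _ SV] by blast
    have "p \<noteq> []" using p(1) unfolding is_path_def by simp
    then obtain q where pq: "p = c # q" using p(2) by (cases p) auto
    have qne: "q \<noteq> []" using pq p(3) sc by auto
    have q: "is_path G q" "adj G c (hd q)" "c \<notin> set q" using is_path_cons2[OF p(1)[unfolded pq] qne] by auto
    have qS: "set q \<subseteq> S - {c}" using p(4) pq q(3) by auto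
    have hq: "hd q \<in> S" using qS qne hd_in_set by blast
    have "set q \<subseteq> side G S c (hd q)"
    proof
      fix z assume "z \<in> set q"
      then show "z \<in> side G S c (hd q)" unfolding side_def using path_reach[OF q(1) qS] by simp
    qed
    then have "\<exists>m q'. p = c # q' \<and> m \<in> S \<and> adj G c m \<and> q' \<noteq> [] \<and> hd q' = m \<and> set q' \<subseteq> side G S c m"
      using pq qne q(2) hq by blast
    moreover have "T (last p) l" using p(3) s(2) by simp
    ultimately show ?thesis using p(1,2,4) by blast
  qed
  have "\<forall>l\<in>L. \<exists>p. is_path G p \<and> hd p = c \<and> set p \<subseteq> S \<and> T (last p) l \<and>
      (p = [c] \<or> (\<exists>m q. p = c # q \<and> m \<in> S \<and> adj G c m \<and> q \<noteq> [] \<and> hd q = m \<and> set q \<subseteq> side G S c m))"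
    using ex by blast
  from bchoice[OF this] obtain \<pi> where piall: "\<forall>l\<in>L. is_path G (\<pi> l) \<and> hd (\<pi> l) = c \<and> set (\<pi> l) \<subseteq> S \<and> T (last (\<pi> l)) l \<and>
      (\<pi> l = [c] \<or> (\<exists>m q. \<pi> l = c # q \<and> m \<in> S \<and> adj G c m \<and> q \<noteq> [] \<and> hd q = m \<and> set q \<subseteq> side G S c m))" ..
  have pi: "is_path G (\<pi> l) \<and> hd (\<pi> l) = c \<and> set (\<pi> l) \<subseteq> S \<and> T (last (\<pi> l)) l \<and>
      (\<pi> l = [c] \<or> (\<exists>m q. \<pi> l = c # q \<and> m \<in> S \<and> adj G c m \<and> q \<noteq> [] \<and> hd q = m \<and> set q \<subseteq> side G S c m))"
    if "l \<in> L" for l by (rule bspec[OF piall that])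
  have cin: "c \<in> set (\<pi> l)" if "l \<in> L" for l
  proof -
    have "\<pi> l \<noteq> []" using pi[OF that] unfolding is_path_def by simp
    moreover have "hd (\<pi> l) = c" using pi[OF that] by simp
    ultimately show ?thesis using hd_in_set[of "\<pi> l"] by simp
  qed
  have pw: "set (\<pi> l) \<inter> set (\<pi> l') = {c}" if l: "l \<in> L" "l' \<in> L" "l \<noteq> l'" for l l'
  proof (cases "\<pi> l = [c] \<or> \<pi> l' = [c]")
    case True
    then show ?thesis
    proof
      assume "\<pi> l = [c]" then show ?thesis using cin[OF l(2)] by simp
    next
      assume "\<pi> l' = [c]" then show ?thesis using cin[OF l(1)] by simp
    qed
  next
    case False
    have "\<exists>m q. \<pi> l = c # q \<and> m \<in> S \<and> adj G c m \<and> q \<noteq> [] \<and> hd q = m \<and> set q \<subseteq> side G S c m"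
      using pi[OF l(1)] False by simp
    then obtain m q where mq: "\<pi> l = c # q" "m \<in> S" "adj G c m" "q \<noteq> []" "hd q = m" "set q \<subseteq> side G S c m"
      by blast
    have "\<exists>m q. \<pi> l' = c # q \<and> m \<in> S \<and> adj G c m \<and> q \<noteq> [] \<and> hd q = m \<and> set q \<subseteq> side G S c m"
      using pi[OF l(2)] False by simp
    then obtain m' q' where mq': "\<pi> l' = c # q'" "m' \<in> S" "adj G c m'" "q' \<noteq> []" "hd q' = m'" "set q' \<subseteq> side G S c m'"
      by blast
    have t1: "T (last q) l" using pi[OF l(1)] mq(1,4) by simp
    have t2: "T (last q') l'" using pi[OF l(2)] mq'(1,4) by simp
    show ?thesis
    proof (cases "m = m'")
      case True
      have "last q \<in> side G S c m" using mq(4,6) last_in_set by blast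
      moreover have "last q' \<in> side G S c m" using mq'(4,6) True last_in_set by blast
      ultimately have "{l, l'} \<subseteq> labs L T (side G S c m)" using t1 t2 l unfolding labs_def by blast
      then have "card {l, l'} \<le> card (labs L T (side G S c m))" by (rule card_mono[OF finlab])
      then have "2 \<le> card (labs L T (side G S c m))" using l(3) by simp
      then show ?thesis using sink[OF mq(2,3)] by simp
    next
      case False
      have "side G S c m \<inter> side G S c m' = {}" by (rule side_disj[OF cS0 mq(2) mq'(2) mq(3) mq'(3) False])
      moreover have "c \<notin> side G S c m" "c \<notin> side G S c m'" using side_sub by blast+
      ultimately have "set q \<inter> set q' = {}" "c \<notin> set q" "c \<notin> set q'" using mq(6) mq'(6) by blast+
      then show ?thesis using mq(1) mq'(1) by auto
    qed
  qed
  have "\<forall>l\<in>L. is_path G (\<pi> l) \<and> hd (\<pi> l) = c \<and> set (\<pi> l) \<subseteq> S \<and> T (last (\<pi> l)) l \<and>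
      (\<forall>l'\<in>L. l \<noteq> l' \<longrightarrow> set (\<pi> l) \<inter> set (\<pi> l') = {c})"
  proof (intro ballI conjI impI)
    fix l assume l: "l \<in> L"
    show "is_path G (\<pi> l)" "hd (\<pi> l) = c" "set (\<pi> l) \<subseteq> S" "T (last (\<pi> l)) l" using pi[OF l] by simp_all
    fix l' assume "l' \<in> L" "l \<noteq> l'"
    then show "set (\<pi> l) \<inter> set (\<pi> l') = {c}" using pw l by simp
  qed
  then have "\<exists>c\<in>S. \<exists>\<pi>. \<forall>l\<in>L. is_path G (\<pi> l) \<and> hd (\<pi> l) = c \<and> set (\<pi> l) \<subseteq> S \<and> T (last (\<pi> l)) l \<and>
      (\<forall>l'\<in>L. l \<noteq> l' \<longrightarrow> set (\<pi> l) \<inter> set (\<pi> l') = {c})" using cS0 by blast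
  then show ?thesis by (rule disjI2)
qed

end
end



lemma graph_edge: "graph G \<Longrightarrow> e \<in> edges G \<Longrightarrow> \<exists>u v. e = {u,v} \<and> u \<noteq> v \<and> u \<in> verts G \<and> v \<in> verts G"
  unfolding graph_def by blast

lemma graph_edge_sub: "graph G \<Longrightarrow> e \<in> edges G \<Longrightarrow> e \<subseteq> verts G"
  using graph_edge by fastforce

lemma card_edges_lt:
  assumes fin: "finite E'" and sub: "g ` E \<subseteq> E'" and inj: "inj_on g E" and nz: "z \<in> E' - g ` E"
  shows "card E < card E'"
proof -
  have "card E = card (g ` E)" using inj by (simp add: card_image)
  also have "\<dots> < card E'" using fin sub nz by (intro psubset_card_mono) auto
  finally show ?thesis .
qed

lemma split_bigger:
  fixes G0 C :: "'a graph" and B :: "'a \<Rightarrow> 'a set"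
  assumes gG0: "graph G0" and gC: "graph C" and mB: "model G0 C B" and xC: "x \<in> verts C"
    and md: "min_degree_ge C 3"
    and P: "P1 \<union> P2 = B x" "P1 \<inter> P2 = {}" "conn G0 P1" "conn G0 P2"
    and ab: "a \<in> P1" "b \<in> P2" "adj G0 a b"
    and xP1: "x \<in> P1"
    and L1: "2 \<le> card (labs (neighbours C x) (\<lambda>s y. \<exists>b\<in>B y. adj G0 s b) P1)"
    and L2: "2 \<le> card (labs (neighbours C x) (\<lambda>s y. \<exists>b\<in>B y. adj G0 s b) P2)"
  shows "\<exists>H'. minor H' G0 \<and> min_degree_ge H' 3 \<and> card (edges C) < card (edges H')"
proof -
  define T where "T = (\<lambda>s y. \<exists>b\<in>B y. adj G0 s b)"
  define N where "N = neighbours C x"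
  define L1s where "L1s = labs N T P1"
  define L2s where "L2s = labs N T P2"
  define p2 where "p2 = b"
  have L1': "2 \<le> card L1s" using L1 unfolding L1s_def T_def N_def .
  have L2': "2 \<le> card L2s" using L2 unfolding L2s_def T_def N_def .
  have Nsub: "N \<subseteq> verts C" unfolding N_def neighbours_def using graph_adj[OF gC] by auto
  have xN: "x \<notin> N" unfolding N_def neighbours_def using graph_adj[OF gC] by auto
  have L1N: "L1s \<subseteq> N" "L2s \<subseteq> N" unfolding L1s_def L2s_def labs_def by auto
  have cover: "y \<in> L1s \<or> y \<in> L2s" if "y \<in> N" for y
  proof -
    have "{x,y} \<in> edges C" using that unfolding N_def neighbours_def adj_def by simp
    then obtain s t where "s \<in> B x" "t \<in> B y" "adj G0 s t" using modelD(5)[OF mB] by blast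
    then show ?thesis using that P(1) unfolding L1s_def L2s_def labs_def T_def by blast
  qed
  have p2P: "p2 \<in> P2" using ab unfolding p2_def by simp
  have p2x: "p2 \<noteq> x" using p2P xP1 P(2) by auto
  have p2C: "p2 \<notin> verts C"
  proof
    assume h: "p2 \<in> verts C"
    have "p2 \<in> B p2" using modelD(1)[OF mB h] .
    moreover have "p2 \<in> B x" using p2P P(1) by auto
    ultimately show False using modelD(4)[OF mB h xC p2x] by auto
  qed
  define E' where "E' = {e \<in> edges C. x \<notin> e} \<union> {{x,y} |y. y \<in> L1s} \<union> {{p2,y} |y. y \<in> L2s} \<union> {{x,p2}}"
  define H' where "H' = (verts C \<union> {p2}, E')"
  have vH'[simp]: "verts H' = verts C \<union> {p2}" unfolding H'_def verts_def by simp
  have eH'[simp]: "edges H' = E'" unfolding H'_def edges_def by simp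
  have finC: "finite (verts C)" using gC unfolding graph_def by simp
  have gH': "graph H'"
    unfolding graph_def
  proof (intro conjI ballI)
    show "finite (verts H')" using finC by simp
    fix e assume "e \<in> edges H'"
    then have "e \<in> E'" by simp
    then show "\<exists>u v. e = {u, v} \<and> u \<noteq> v \<and> u \<in> verts H' \<and> v \<in> verts H'"
      unfolding E'_def
    proof (elim UnE)
      assume "e \<in> {e \<in> edges C. x \<notin> e}"
      then obtain u v where "e = {u,v}" "u \<noteq> v" "u \<in> verts C" "v \<in> verts C" using gC unfolding graph_def by blast
      then show ?thesis by auto
    next
      assume "e \<in> {{x,y} |y. y \<in> L1s}"
      then obtain y where "e = {x,y}" "y \<in> L1s" by blast
      then show ?thesis using L1N Nsub xN xC by (intro exI[of _ x] exI[of _ y]) auto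
    next
      assume "e \<in> {{p2,y} |y. y \<in> L2s}"
      then obtain y where "e = {p2,y}" "y \<in> L2s" by blast
      then show ?thesis using L1N Nsub p2C by (intro exI[of _ p2] exI[of _ y]) auto
    next
      assume "e \<in> {{x,p2}}"
      then show ?thesis using p2x xC by (intro exI[of _ x] exI[of _ p2]) auto
    qed
  qed
  define B' where "B' = B(x := P1, p2 := P2)"
  have B'x: "B' x = P1" unfolding B'_def using p2x by simp
  have B'p2: "B' p2 = P2" unfolding B'_def by simp
  have B'w: "B' w = B w" if "w \<noteq> x" "w \<noteq> p2" for w unfolding B'_def using that by simp
  have PBx: "P1 \<subseteq> B x" "P2 \<subseteq> B x" using P(1) by auto
  have disjx: "B x \<inter> B w = {}" if "w \<in> verts C" "w \<noteq> x" for w using modelD(4)[OF mB xC that(1)] that(2) by auto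
  have mB': "model G0 H' B'"
  proof (rule modelI)
    fix w assume w: "w \<in> verts H'"
    show "w \<in> B' w"
    proof (cases "w = x")
      case True then show ?thesis using B'x xP1 by simp
    next
      case False
      show ?thesis
      proof (cases "w = p2")
        case True then show ?thesis using B'p2 p2P by simp
      next
        case False
        then show ?thesis using B'w modelD(1)[OF mB] w \<open>w \<noteq> x\<close> by auto
      qed
    qed
    show "B' w \<subseteq> verts G0"
    proof (cases "w = x \<or> w = p2")
      case True then show ?thesis using B'x B'p2 PBx modelD(2)[OF mB xC] by auto
    next
      case False then show ?thesis using B'w modelD(2)[OF mB] w by auto
    qed
    show "conn G0 (B' w)"
    proof (cases "w = x \<or> w = p2")
      case True then show ?thesis using B'x B'p2 P(3,4) by auto
    next
      case False then show ?thesis using B'w modelD(3)[OF mB] w by auto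
    qed
  next
    fix w z assume w: "w \<in> verts H'" and z: "z \<in> verts H'" and wz: "w \<noteq> z"
    show "B' w \<inter> B' z = {}"
    proof (cases "w = x \<or> w = p2")
      case True
      show ?thesis
      proof (cases "z = x \<or> z = p2")
        case True
        then show ?thesis using \<open>w = x \<or> w = p2\<close> wz B'x B'p2 P(2) by auto
      next
        case False
        then have "B' z = B z" "z \<in> verts C" "z \<noteq> x" using B'w z by auto
        then show ?thesis using \<open>w = x \<or> w = p2\<close> B'x B'p2 PBx disjx by blast
      qed
    next
      case False
      then have wC: "B' w = B w" "w \<in> verts C" "w \<noteq> x" using B'w w by auto
      show ?thesis
      proof (cases "z = x \<or> z = p2")
        case True
        then show ?thesis using wC B'x B'p2 PBx disjx by blast
      next
        case False
        then have "B' z = B z" "z \<in> verts C" using B'w z by auto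
        then show ?thesis using wC modelD(4)[OF mB] wz by auto
      qed
    qed
  next
    fix u v assume e: "{u, v} \<in> edges H'"
    then have "{u,v} \<in> E'" by simp
    then show "\<exists>a\<in>B' u. \<exists>b\<in>B' v. adj G0 a b"
      unfolding E'_def
    proof (elim UnE)
      assume h: "{u,v} \<in> {e \<in> edges C. x \<notin> e}"
      then have uv: "u \<in> verts C" "v \<in> verts C" "u \<noteq> x" "v \<noteq> x" using graph_adj[OF gC, of u v] by (auto simp: adj_def)
      then have "B' u = B u" "B' v = B v" using B'w p2C by auto
      then show ?thesis using modelD(5)[OF mB] h by auto
    next
      assume "{u,v} \<in> {{x,y} |y. y \<in> L1s}"
      then obtain y where y: "{u,v} = {x,y}" "y \<in> L1s" by blast
      have yy: "y \<in> verts C" "y \<noteq> x" "y \<noteq> p2" using y(2) L1N Nsub xN p2C by auto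
      obtain s t where st: "s \<in> P1" "t \<in> B y" "adj G0 s t" using y(2) unfolding L1s_def labs_def T_def by blast
      have "B' y = B y" using B'w yy by simp
      then show ?thesis using y(1) st B'x adj_sym[OF st(3)] by (auto simp: doubleton_eq_iff)
    next
      assume "{u,v} \<in> {{p2,y} |y. y \<in> L2s}"
      then obtain y where y: "{u,v} = {p2,y}" "y \<in> L2s" by blast
      have yy: "y \<in> verts C" "y \<noteq> x" "y \<noteq> p2" using y(2) L1N Nsub xN p2C by auto
      obtain s t where st: "s \<in> P2" "t \<in> B y" "adj G0 s t" using y(2) unfolding L2s_def labs_def T_def by blast
      have "B' y = B y" using B'w yy by simp
      then show ?thesis using y(1) st B'p2 adj_sym[OF st(3)] by (auto simp: doubleton_eq_iff)
    next
      assume "{u,v} \<in> {{x,p2}}"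
      then have "{u,v} = {x,p2}" by simp
      then show ?thesis using ab B'x B'p2 adj_sym[OF ab(3)] unfolding p2_def by (auto simp: doubleton_eq_iff)
    qed
  qed
  have minor: "minor H' G0" by (rule model_minor[OF gG0 gH' mB'])
  have Eadj: "{w,u} \<in> E'" if "adj H' w u" for w u using that unfolding adj_def by simp
  have nbH: "u \<in> neighbours H' w \<longleftrightarrow> {w,u} \<in> E'" for w u unfolding neighbours_def adj_def by simp
  have finnb: "finite (neighbours H' w)" for w by (rule graph_finite_nb[OF gH'])
  have degC: "3 \<le> card (neighbours C w)" if "w \<in> verts C" for w using md that unfolding min_degree_ge_def degree_def by blast
  have md': "min_degree_ge H' 3"
    unfolding min_degree_ge_def degree_def
  proof
    fix w assume w: "w \<in> verts H'"
    show "3 \<le> card (neighbours H' w)"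
    proof (cases "w = x")
      case True
      have "insert p2 L1s \<subseteq> neighbours H' w" using True by (auto simp: nbH E'_def)
      moreover have "card (insert p2 L1s) = Suc (card L1s)" using L1N Nsub p2C finC
        by (intro card_insert_disjoint) (auto intro: finite_subset)
      moreover have "card (insert p2 L1s) \<le> card (neighbours H' w)" using calculation(1) by (rule card_mono[OF finnb])
      ultimately show ?thesis using L1' by linarith
    next
      case False
      show ?thesis
      proof (cases "w = p2")
        case True
        have "insert x L2s \<subseteq> neighbours H' w" using True by (auto simp: nbH E'_def insert_commute)
        moreover have "card (insert x L2s) = Suc (card L2s)" using L1N Nsub xN finC
          by (intro card_insert_disjoint) (auto intro: finite_subset)
        moreover have "card (insert x L2s) \<le> card (neighbours H' w)" using calculation(1) by (rule card_mono[OF finnb])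
        ultimately show ?thesis using L2' by linarith
      next
        case False
        have wC: "w \<in> verts C" using w \<open>w \<noteq> p2\<close> by simp
        have finNw: "finite (neighbours C w)" by (rule graph_finite_nb[OF gC])
        have keep: "neighbours C w - {x} \<subseteq> neighbours H' w"
        proof
          fix u assume u: "u \<in> neighbours C w - {x}"
          then have "{w,u} \<in> edges C" unfolding neighbours_def adj_def by simp
          then show "u \<in> neighbours H' w" unfolding nbH E'_def using u \<open>w \<noteq> x\<close> by auto
        qed
        show ?thesis
        proof (cases "x \<in> neighbours C w")
          case False
          then have "neighbours C w \<subseteq> neighbours H' w" using keep by auto
          then have "card (neighbours C w) \<le> card (neighbours H' w)" by (rule card_mono[OF finnb])
          then show ?thesis using degC[OF wC] by linarith
        next
          case True
          have wN: "w \<in> N" using True unfolding N_def neighbours_def adj_def by (simp add: insert_commute)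
          define z where "z = (if w \<in> L1s then x else p2)"
          have zin: "z \<in> neighbours H' w"
          proof (cases "w \<in> L1s")
            case True then show ?thesis unfolding z_def nbH E'_def by (auto simp: insert_commute)
          next
            case False then have "w \<in> L2s" using cover[OF wN] by simp
            then show ?thesis using False unfolding z_def nbH E'_def by (auto simp: insert_commute)
          qed
          have znot: "z \<notin> neighbours C w - {x}"
            unfolding z_def using graph_adj[OF gC] p2C unfolding neighbours_def by auto
          have "insert z (neighbours C w - {x}) \<subseteq> neighbours H' w" using zin keep by auto
          then have c1: "card (insert z (neighbours C w - {x})) \<le> card (neighbours H' w)" by (rule card_mono[OF finnb])
          have c2: "card (insert z (neighbours C w - {x})) = Suc (card (neighbours C w - {x}))"
            using znot finNw by simp
          have c3: "card (neighbours C w - {x}) = card (neighbours C w) - 1" using True finNw by (simp add: card_Diff_singleton)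
          have c4: "card (neighbours C w) > 0" using True finNw card_gt_0_iff by blast
          show ?thesis using c1 c2 c3 c4 degC[OF wC] by linarith
        qed
      qed
    qed
  qed
  define g where "g = (\<lambda>e. if x \<in> e then (if e - {x} \<subseteq> L1s then e else insert p2 (e - {x})) else e)"
  define h where "h = (\<lambda>f. if p2 \<in> f then insert x (f - {p2}) else f)"
  have eC: "e \<subseteq> verts C" if "e \<in> edges C" for e using graph_edge_sub[OF gC that] .
  have xe: "\<exists>y. e = {x,y} \<and> y \<in> N" if ee: "e \<in> edges C" "x \<in> e" for e
  proof -
    obtain u v where uv: "e = {u,v}" "u \<noteq> v" using graph_edge[OF gC ee(1)] by blast
    show ?thesis
    proof (cases "u = x")
      case True
      then have "e = {x,v}" using uv by simp
      moreover then have "v \<in> N" using ee(1) unfolding N_def neighbours_def adj_def by simp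
      ultimately show ?thesis by blast
    next
      case False
      then have "v = x" using uv ee(2) by simp
      then have "e = {x,u}" using uv by (simp add: insert_commute)
      moreover then have "u \<in> N" using ee(1) unfolding N_def neighbours_def adj_def by simp
      ultimately show ?thesis by blast
    qed
  qed
  have hg: "h (g e) = e" if e: "e \<in> edges C" for e
  proof -
    have p2e: "p2 \<notin> e" using eC[OF e] p2C by auto
    show "h (g e) = e"
    proof (cases "x \<in> e")
      case True
      show ?thesis
      proof (cases "e - {x} \<subseteq> L1s")
        case True
        then have "g e = e" using \<open>x \<in> e\<close> unfolding g_def by simp
        then show ?thesis using p2e unfolding h_def by simp
      next
        case False
        then have ge: "g e = insert p2 (e - {x})" using \<open>x \<in> e\<close> unfolding g_def by simp
        have "insert p2 (e - {x}) - {p2} = e - {x}" using p2e by blast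
        then have "h (insert p2 (e - {x})) = insert x (e - {x})" unfolding h_def by simp
        also have "\<dots> = e" using \<open>x \<in> e\<close> by blast
        finally show ?thesis using ge by simp
      qed
    next
      case False
      then have "g e = e" unfolding g_def by simp
      then show ?thesis using p2e unfolding h_def by simp
    qed
  qed
  have inj: "inj_on g (edges C)"
    by (rule inj_on_inverseI[where g = h]) (rule hg)
  have gsub: "g ` edges C \<subseteq> E'"
  proof
    fix f assume "f \<in> g ` edges C"
    then obtain e where e: "e \<in> edges C" "f = g e" by blast
    show "f \<in> E'"
    proof (cases "x \<in> e")
      case True
      then obtain y where y: "e = {x,y}" "y \<in> N" using xe e(1) by blast
      have ey: "e - {x} = {y}" using y xN by auto
      show ?thesis
      proof (cases "y \<in> L1s")
        case True then show ?thesis using e y ey unfolding g_def E'_def by auto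
      next
        case False then have "y \<in> L2s" using cover[OF y(2)] by simp
        then show ?thesis using e y ey False \<open>x \<in> e\<close> unfolding g_def E'_def by auto
      qed
    next
      case False then show ?thesis using e unfolding g_def E'_def by auto
    qed
  qed
  have notin: "{x,p2} \<notin> g ` edges C"
  proof
    assume "{x,p2} \<in> g ` edges C"
    then obtain e where e: "e \<in> edges C" "{x,p2} = g e" by blast
    have p2e: "p2 \<notin> e" using eC[OF e(1)] p2C by auto
    show False
    proof (cases "x \<in> e")
      case True
      show False
      proof (cases "e - {x} \<subseteq> L1s")
        case True then show False using e \<open>x \<in> e\<close> p2e unfolding g_def by auto
      next
        case False
        then have "{x,p2} = insert p2 (e - {x})" using e \<open>x \<in> e\<close> unfolding g_def by simp
        then have "x \<in> insert p2 (e - {x})" by blast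
        then show False using p2x by auto
      qed
    next
      case False then show False using e p2e unfolding g_def by auto
    qed
  qed
  have "card (edges C) < card E'"
    by (rule card_edges_lt[OF _ gsub inj, of "{x,p2}"])
       (use graph_finite_edges[OF gH'] notin in \<open>auto simp: E'_def\<close>)
  then show ?thesis using minor md' by (intro exI[of _ H']) simp
qed



lemma bridge_min:
  assumes gG0: "graph G0" and mB: "model G0 C B" and gC: "graph C" and xC: "x \<in> verts C"
    and ab: "a \<in> B x" "b \<in> B x" "adj G0 a b"
    and minimal: "\<And>E'. E' \<subseteq> edges G0 \<Longrightarrow> minor C (verts G0, E') \<Longrightarrow> card (edges G0) \<le> card E'"
  shows "\<not> reach (delE G0 {a,b}) (B x) a b"
proof
  assume r: "reach (delE G0 {a,b}) (B x) a b"
  define G1 where "G1 = delE G0 {a,b}"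
  have vG1: "verts G1 = verts G0" unfolding G1_def delE_def verts_def by simp
  have eG1: "edges G1 = edges G0 - {{a,b}}" unfolding G1_def delE_def edges_def by simp
  have G1eq: "G1 = (verts G0, edges G0 - {{a,b}})" unfolding G1_def delE_def verts_def edges_def by simp
  have gG1: "graph G1" using gG0 unfolding graph_def vG1 eG1 by blast
  have yx: "y = x" if "y \<in> verts C" "a \<in> B y" for y
  proof (rule ccontr)
    assume "y \<noteq> x"
    then show False using modelD(4)[OF mB that(1) xC] that(2) ab(1) by auto
  qed
  have yx2: "y = x" if "y \<in> verts C" "b \<in> B y" for y
  proof (rule ccontr)
    assume "y \<noteq> x"
    then show False using modelD(4)[OF mB that(1) xC] that(2) ab(2) by auto
  qed
  have mB1: "model G1 C B"
  proof (rule modelI)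
    fix y assume y: "y \<in> verts C"
    show "y \<in> B y" using modelD(1)[OF mB y] .
    show "B y \<subseteq> verts G1" using modelD(2)[OF mB y] vG1 by simp
    show "conn G1 (B y)" unfolding conn_def
    proof (intro ballI)
      fix p q assume pq: "p \<in> B y" "q \<in> B y"
      have "reach G0 (B y) p q" using modelD(3)[OF mB y] pq unfolding conn_def by blast
      then show "reach G1 (B y) p q"
      proof (rule reach_gen)
        fix u v assume uv: "u \<in> B y" "v \<in> B y" "adj G0 u v"
        show "reach G1 (B y) u v"
        proof (cases "{u,v} = {a,b}")
          case True
          then have "a \<in> B y" using uv by (auto simp: doubleton_eq_iff)
          then have yeq: "y = x" using yx y by blast
          have r1: "reach G1 (B y) a b" using r yeq unfolding G1_def by simp
          from True have "(u = a \<and> v = b) \<or> (u = b \<and> v = a)" by (auto simp: doubleton_eq_iff)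
          then show ?thesis using r1 reach_sym[OF r1] by blast
        next
          case False
          then have "adj G1 u v" unfolding G1_def using adj_delE[OF uv(3)] by simp
          then show ?thesis using uv by (intro reach_edge) auto
        qed
      next
        show "p \<in> B y" by fact
      qed
    qed
  next
    fix y z assume "y \<in> verts C" "z \<in> verts C" "y \<noteq> z"
    then show "B y \<inter> B z = {}" using modelD(4)[OF mB] by blast
  next
    fix p q assume e: "{p,q} \<in> edges C"
    obtain a' b' where ab': "a' \<in> B p" "b' \<in> B q" "adj G0 a' b'" using modelD(5)[OF mB e] by blast
    have pq: "p \<in> verts C" "q \<in> verts C" "p \<noteq> q" using graph_adj[OF gC, of p q] e by (auto simp: adj_def)
    have "{a',b'} \<noteq> {a,b}"
    proof
      assume h: "{a',b'} = {a,b}"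
      then have "(a' = a \<and> b' = b) \<or> (a' = b \<and> b' = a)" by (auto simp: doubleton_eq_iff)
      then show False
      proof
        assume "a' = a \<and> b' = b"
        then have "p = x" "q = x" using yx[OF pq(1)] yx2[OF pq(2)] ab'(1,2) by auto
        then show False using pq by simp
      next
        assume "a' = b \<and> b' = a"
        then have "p = x" "q = x" using yx2[OF pq(1)] yx[OF pq(2)] ab'(1,2) by auto
        then show False using pq by simp
      qed
    qed
    then have "adj G1 a' b'" unfolding G1_def using adj_delE[OF ab'(3)] by simp
    then show "\<exists>a\<in>B p. \<exists>b\<in>B q. adj G1 a b" using ab' by blast
  qed
  have "minor C G1" by (rule model_minor[OF gG1 gC mB1])
  then have "card (edges G0) \<le> card (edges G0 - {{a,b}})" using minimal[of "edges G0 - {{a,b}}"] G1eq by auto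
  moreover have "{a,b} \<in> edges G0" using ab(3) unfolding adj_def .
  moreover have "finite (edges G0)" using graph_finite_edges[OF gG0] .
  moreover have "card (edges G0) > 0" using calculation(2,3) card_gt_0_iff by blast
  ultimately show False by (simp add: card_Diff_singleton)
qed

lemma relabel:
  assumes gG0: "graph G0" and gC: "graph C" and mB: "model G0 C B"
    and cen0: "\<forall>x\<in>verts C. cen x \<in> B x"
    and C'def: "C' = (cen ` verts C, (\<lambda>e. cen ` e) ` edges C)"
  shows "inj_on cen (verts C)" and "verts C' = cen ` verts C" and "edges C' = (\<lambda>e. cen ` e) ` edges C"
    and "\<And>u v. u \<in> verts C \<Longrightarrow> v \<in> verts C \<Longrightarrow> adj C' (cen u) (cen v) \<longleftrightarrow> adj C u v"
    and "\<And>x. x \<in> verts C \<Longrightarrow> neighbours C' (cen x) = cen ` neighbours C x"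
    and "card (edges C') = card (edges C)"
    and "graph C'" and "minor C' G0"
proof -
  have cen: "cen x \<in> B x" if "x \<in> verts C" for x using cen0 that by blast
  show inj: "inj_on cen (verts C)"
  proof (rule inj_onI)
    fix u v assume uv: "u \<in> verts C" "v \<in> verts C" "cen u = cen v"
    show "u = v"
    proof (rule ccontr)
      assume "u \<noteq> v"
      then have "B u \<inter> B v = {}" using modelD(4)[OF mB uv(1,2)] by blast
      then show False using cen[OF uv(1)] cen[OF uv(2)] uv(3) by auto
    qed
  qed
  show vC': "verts C' = cen ` verts C" unfolding C'def verts_def by simp
  show eC': "edges C' = (\<lambda>e. cen ` e) ` edges C" unfolding C'def edges_def by simp
  have eC: "e \<subseteq> verts C" if "e \<in> edges C" for e using graph_edge_sub[OF gC that] .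
  have adjeq: "adj C' (cen u) (cen v) \<longleftrightarrow> adj C u v" if uv: "u \<in> verts C" "v \<in> verts C" for u v
  proof
    assume "adj C' (cen u) (cen v)"
    then obtain e where e: "e \<in> edges C" "{cen u, cen v} = cen ` e" unfolding adj_def eC' by blast
    have ce: "cen ` {u,v} = cen ` e" using e(2) by simp
    have "{u,v} \<subseteq> verts C" using uv by simp
    then have "{u,v} = e" using iffD1[OF inj_on_image_eq_iff[OF inj _ eC[OF e(1)]] ce] by blast
    then show "adj C u v" using e(1) unfolding adj_def by simp
  next
    assume "adj C u v"
    then have "cen ` {u,v} \<in> (\<lambda>e. cen ` e) ` edges C" unfolding adj_def by blast
    then show "adj C' (cen u) (cen v)" unfolding adj_def eC' by simp
  qed
  show "\<And>u v. u \<in> verts C \<Longrightarrow> v \<in> verts C \<Longrightarrow> adj C' (cen u) (cen v) \<longleftrightarrow> adj C u v" by (rule adjeq)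
  show gC': "graph C'"
    unfolding graph_def
  proof (intro conjI ballI)
    show "finite (verts C')" using gC vC' unfolding graph_def by simp
    fix e assume "e \<in> edges C'"
    then obtain e0 where e0: "e0 \<in> edges C" "e = cen ` e0" using eC' by auto
    obtain u v where uv: "e0 = {u,v}" "u \<noteq> v" "u \<in> verts C" "v \<in> verts C" using graph_edge[OF gC e0(1)] by blast
    have "cen u \<noteq> cen v" using inj_on_contraD[OF inj uv(2) uv(3) uv(4)] .
    then show "\<exists>p q. e = {p, q} \<and> p \<noteq> q \<and> p \<in> verts C' \<and> q \<in> verts C'"
      using uv e0 vC' by (intro exI[of _ "cen u"] exI[of _ "cen v"]) auto
  qed
  have nbeq: "neighbours C' (cen x) = cen ` neighbours C x" if x: "x \<in> verts C" for x
  proof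
    show "neighbours C' (cen x) \<subseteq> cen ` neighbours C x"
    proof
      fix w assume w: "w \<in> neighbours C' (cen x)"
      then have "adj C' (cen x) w" unfolding neighbours_def by simp
      then have "w \<in> verts C'" using graph_adj[OF gC'] by blast
      then obtain y where y: "y \<in> verts C" "w = cen y" using vC' by auto
      then have "adj C x y" using adjeq[OF x y(1)] \<open>adj C' (cen x) w\<close> by simp
      then show "w \<in> cen ` neighbours C x" using y unfolding neighbours_def by simp
    qed
  next
    show "cen ` neighbours C x \<subseteq> neighbours C' (cen x)"
    proof
      fix w assume "w \<in> cen ` neighbours C x"
      then obtain y where y: "adj C x y" "w = cen y" unfolding neighbours_def by auto
      have "y \<in> verts C" using graph_adj[OF gC y(1)] by blast
      then show "w \<in> neighbours C' (cen x)" using adjeq[OF x] y unfolding neighbours_def by simp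
    qed
  qed
  show "\<And>x. x \<in> verts C \<Longrightarrow> neighbours C' (cen x) = cen ` neighbours C x" by (rule nbeq)
  have "inj_on (\<lambda>e. cen ` e) (edges C)"
  proof (rule inj_onI)
    fix e1 e2 assume "e1 \<in> edges C" "e2 \<in> edges C" "cen ` e1 = cen ` e2"
    then show "e1 = e2" using inj_on_image_eq_iff[OF inj eC eC] by simp
  qed
  then show "card (edges C') = card (edges C)" unfolding eC' by (simp add: card_image)
  define B' where "B' = (\<lambda>w. B (inv_into (verts C) cen w))"
  have B'c: "B' (cen x) = B x" if "x \<in> verts C" for x unfolding B'_def using inv_into_f_f[OF inj that] by simp
  have "model G0 C' B'"
  proof (rule modelI)
    fix w assume "w \<in> verts C'"
    then obtain x where x: "x \<in> verts C" "w = cen x" using vC' by auto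
    show "w \<in> B' w" using x B'c cen by simp
    show "B' w \<subseteq> verts G0" using x B'c modelD(2)[OF mB] by simp
    show "conn G0 (B' w)" using x B'c modelD(3)[OF mB] by simp
  next
    fix w z assume "w \<in> verts C'" "z \<in> verts C'" "w \<noteq> z"
    then obtain x y where "x \<in> verts C" "w = cen x" "y \<in> verts C" "z = cen y" "x \<noteq> y" using vC' by auto
    then show "B' w \<inter> B' z = {}" using B'c modelD(4)[OF mB] by simp
  next
    fix p q assume "{p,q} \<in> edges C'"
    then have "adj C' p q" unfolding adj_def .
    then have "p \<in> verts C'" "q \<in> verts C'" using graph_adj[OF gC'] by blast+
    then obtain x y where xy: "x \<in> verts C" "p = cen x" "y \<in> verts C" "q = cen y" using vC' by auto
    then have "adj C x y" using adjeq \<open>adj C' p q\<close> by simp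
    then obtain a b where "a \<in> B x" "b \<in> B y" "adj G0 a b" using modelD(5)[OF mB] unfolding adj_def by blast
    then show "\<exists>a\<in>B' p. \<exists>b\<in>B' q. adj G0 a b" using xy B'c by auto
  qed
  then show "minor C' G0" by (rule model_minor[OF gG0 gC'])
qed



lemma set4: "A \<inter> A' = {c} \<Longrightarrow> A \<subseteq> X \<Longrightarrow> A' \<subseteq> X \<Longrightarrow> R \<subseteq> Y \<Longrightarrow> R' \<subseteq> Y' \<Longrightarrow> X \<inter> Y = {} \<Longrightarrow>
   X \<inter> Y' = {} \<Longrightarrow> Y \<inter> Y' = {} \<Longrightarrow> (A \<union> R) \<inter> (A' \<union> R') = {c}"
  by blast

theorem lemma18:
  fixes G C :: "'a graph"
  assumes "graph G" and "minor_3_core G C"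
  shows "\<exists>C'. minor_3_core G C' \<and> isomorphic C C' \<and>
           (\<forall>v\<in>verts C'. disjoint_paths_property G C' v)"
proof -
  note gG = assms(1)
  have mCG: "minor C G" and mdC: "min_degree_ge C 3"
    and maxC: "\<And>H'. minor H' G \<Longrightarrow> min_degree_ge H' 3 \<Longrightarrow> card (edges H') \<le> card (edges C)"
    using assms(2) unfolding minor_3_core_def by auto
  have gC: "graph C" using minor_graph[OF mCG] by simp
  define PE where "PE = (\<lambda>E0. E0 \<subseteq> edges G \<and> minor C (verts G, E0))"
  have "(verts G, edges G) = G" by (simp add: verts_def edges_def)
  then have "PE (edges G)" unfolding PE_def using mCG by simp
  then obtain E0 where PE0: "PE E0" and E0min: "\<forall>E'. PE E' \<longrightarrow> card E0 \<le> card E'"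
    using ex_has_least_nat[of PE "edges G" card] by blast
  define G0 where "G0 = (verts G, E0)"
  have vG0: "verts G0 = verts G" unfolding G0_def verts_def by simp
  have eG0: "edges G0 = E0" unfolding G0_def edges_def by simp
  have E0sub: "E0 \<subseteq> edges G" using PE0 unfolding PE_def by simp
  have mCG0: "minor C G0" using PE0 unfolding PE_def G0_def by simp
  have gG0: "graph G0" using gG E0sub unfolding graph_def vG0 eG0 by blast
  have subG0: "subgraph G0 G" unfolding subgraph_def using gG0 vG0 eG0 E0sub by simp
  have lift: "minor H G" if "minor H G0" for H using minor_trans[OF that subgraph_minor[OF gG subG0]] .
  obtain B where mB: "model G0 C B" using minor_model[OF mCG0] by blast
  have minimal: "card (edges G0) \<le> card E'" if "E' \<subseteq> edges G0" "minor C (verts G0, E')" for E'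
  proof -
    have "PE E'" unfolding PE_def using that E0sub eG0 vG0 by auto
    then show ?thesis using E0min eG0 by simp
  qed
  define T where "T = (\<lambda>s y. \<exists>b\<in>B y. adj G0 s b)"
  have finV: "finite (verts G0)" using gG0 unfolding graph_def by simp
  have center: "\<exists>c. c \<in> B x \<and> (\<exists>\<pi>. \<forall>y\<in>neighbours C x. is_path G0 (\<pi> y) \<and> hd (\<pi> y) = c \<and> set (\<pi> y) \<subseteq> B x \<and>
        T (last (\<pi> y)) y \<and> (\<forall>y'\<in>neighbours C x. y \<noteq> y' \<longrightarrow> set (\<pi> y) \<inter> set (\<pi> y') = {c}))"
    if xC: "x \<in> verts C" for x
  proof -
    have SV: "B x \<subseteq> verts G0" using modelD(2)[OF mB xC] .
    have cS: "conn G0 (B x)" using modelD(3)[OF mB xC] .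
    have br: "\<not> reach (delE G0 {a,b}) (B x) a b" if "a \<in> B x" "b \<in> B x" "adj G0 a b" for a b
      using bridge_min[OF gG0 mB gC xC that minimal] by blast
    have finL: "finite (neighbours C x)" by (rule graph_finite_nb[OF gC])
    have cardL: "3 \<le> card (neighbours C x)" using mdC xC unfolding min_degree_ge_def degree_def by blast
    have cover: "\<exists>s\<in>B x. T s l" if "l \<in> neighbours C x" for l
    proof -
      have "{x,l} \<in> edges C" using that unfolding neighbours_def adj_def by simp
      then obtain s t where "s \<in> B x" "t \<in> B l" "adj G0 s t" using modelD(5)[OF mB] by blast
      then show ?thesis unfolding T_def by blast
    qed
    note cr = core[OF gG0 SV cS br finL cardL cover]
    show ?thesis
    proof (rule disjE[OF cr])
      assume "\<exists>P1 P2. P1 \<union> P2 = B x \<and> P1 \<inter> P2 = {} \<and> conn G0 P1 \<and> conn G0 P2 \<and> (\<exists>a\<in>P1. \<exists>b\<in>P2. adj G0 a b) \<and>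
          2 \<le> card (labs (neighbours C x) T P1) \<and> 2 \<le> card (labs (neighbours C x) T P2)"
      then obtain P1 P2 a b where P: "P1 \<union> P2 = B x" "P1 \<inter> P2 = {}" "conn G0 P1" "conn G0 P2"
        and ab: "a \<in> P1" "b \<in> P2" "adj G0 a b"
        and L: "2 \<le> card (labs (neighbours C x) T P1)" "2 \<le> card (labs (neighbours C x) T P2)" by blast
      have "x \<in> B x" using modelD(1)[OF mB xC] .
      then have "x \<in> P1 \<or> x \<in> P2" using P(1) by blast
      then have "\<exists>H'. minor H' G0 \<and> min_degree_ge H' 3 \<and> card (edges C) < card (edges H')"
      proof
        assume "x \<in> P1"
        then show ?thesis using split_bigger[OF gG0 gC mB xC mdC P ab _ L[unfolded T_def]] by blast
      next
        assume x2: "x \<in> P2"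
        have P': "P2 \<union> P1 = B x" "P2 \<inter> P1 = {}" using P(1,2) by auto
        have ab': "adj G0 b a" using adj_sym[OF ab(3)] .
        show ?thesis using split_bigger[OF gG0 gC mB xC mdC P' P(4) P(3) ab(2) ab(1) ab' x2 L(2)[unfolded T_def] L(1)[unfolded T_def]] by blast
      qed
      then obtain H' where "minor H' G0" "min_degree_ge H' 3" "card (edges C) < card (edges H')" by blast
      then show ?thesis using maxC[OF lift] by fastforce
    next
      assume "\<exists>c\<in>B x. \<exists>\<pi>. \<forall>l\<in>neighbours C x. is_path G0 (\<pi> l) \<and> hd (\<pi> l) = c \<and> set (\<pi> l) \<subseteq> B x \<and> T (last (\<pi> l)) l \<and>
          (\<forall>l'\<in>neighbours C x. l \<noteq> l' \<longrightarrow> set (\<pi> l) \<inter> set (\<pi> l') = {c})"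
      then show ?thesis by blast
    qed
  qed
  obtain cen where cen: "\<forall>x\<in>verts C. cen x \<in> B x \<and> (\<exists>\<pi>. \<forall>y\<in>neighbours C x. is_path G0 (\<pi> y) \<and> hd (\<pi> y) = cen x \<and> set (\<pi> y) \<subseteq> B x \<and>
        T (last (\<pi> y)) y \<and> (\<forall>y'\<in>neighbours C x. y \<noteq> y' \<longrightarrow> set (\<pi> y) \<inter> set (\<pi> y') = {cen x}))"
  proof -
    have "\<forall>x\<in>verts C. \<exists>c. c \<in> B x \<and> (\<exists>\<pi>. \<forall>y\<in>neighbours C x. is_path G0 (\<pi> y) \<and> hd (\<pi> y) = c \<and> set (\<pi> y) \<subseteq> B x \<and>
        T (last (\<pi> y)) y \<and> (\<forall>y'\<in>neighbours C x. y \<noteq> y' \<longrightarrow> set (\<pi> y) \<inter> set (\<pi> y') = {c}))"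
      using center by blast
    from bchoice[OF this] show ?thesis using that by blast
  qed
  obtain pis where pis: "\<forall>x\<in>verts C. \<forall>y\<in>neighbours C x. is_path G0 (pis x y) \<and> hd (pis x y) = cen x \<and> set (pis x y) \<subseteq> B x \<and>
        T (last (pis x y)) y \<and> (\<forall>y'\<in>neighbours C x. y \<noteq> y' \<longrightarrow> set (pis x y) \<inter> set (pis x y') = {cen x})"
    using bchoice[of "verts C" "\<lambda>x \<pi>. \<forall>y\<in>neighbours C x. is_path G0 (\<pi> y) \<and> hd (\<pi> y) = cen x \<and> set (\<pi> y) \<subseteq> B x \<and>
        T (last (\<pi> y)) y \<and> (\<forall>y'\<in>neighbours C x. y \<noteq> y' \<longrightarrow> set (\<pi> y) \<inter> set (\<pi> y') = {cen x})"] cen by blast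
  have cenB: "cen x \<in> B x" if "x \<in> verts C" for x using cen that by blast
  define C' where "C' = (cen ` verts C, (\<lambda>e. cen ` e) ` edges C)"
  have cenB': "\<forall>x\<in>verts C. cen x \<in> B x" using cenB by blast
  note R = relabel[OF gG0 gC mB cenB' C'_def]
  have mC'G: "minor C' G" using lift[OF R(8)] .
  have Nsub: "neighbours C x \<subseteq> verts C" for x unfolding neighbours_def using graph_adj[OF gC] by auto
  have md': "min_degree_ge C' 3"
    unfolding min_degree_ge_def
  proof
    fix v assume "v \<in> verts C'"
    then obtain x where x: "x \<in> verts C" "v = cen x" using R(2) by auto
    have "degree C' v = card (cen ` neighbours C x)" unfolding degree_def using R(5)[OF x(1)] x(2) by simp
    also have "\<dots> = card (neighbours C x)" using card_image[OF inj_on_subset[OF R(1) Nsub]] .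
    finally show "3 \<le> degree C' v" using mdC x(1) unfolding min_degree_ge_def degree_def by simp
  qed
  have core': "minor_3_core G C'"
    unfolding minor_3_core_def using mC'G md' maxC R(6) by simp
  have iso: "isomorphic C C'"
    unfolding isomorphic_def
  proof (intro exI[of _ cen] conjI)
    show "bij_betw cen (verts C) (verts C')" using bij_betw_imageI[OF R(1) R(2)[symmetric]] .
    show "\<forall>u\<in>verts C. \<forall>v\<in>verts C. adj C u v = adj C' (cen u) (cen v)" using R(4) by simp
  qed
  have dpp: "disjoint_paths_property G C' v" if v: "v \<in> verts C'" for v
  proof -
    obtain x where x: "x \<in> verts C" "v = cen x" using v R(2) by auto
    define Q where "Q = (\<lambda>y r. is_path G0 r \<and> adj G0 (last (pis x y)) (hd r) \<and> last r = cen y \<and> set r \<subseteq> B y)"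
    define rho where "rho = (\<lambda>y. SOME r. Q y r)"
    have pisx: "is_path G0 (pis x y) \<and> hd (pis x y) = cen x \<and> set (pis x y) \<subseteq> B x \<and>
        T (last (pis x y)) y \<and> (\<forall>y'\<in>neighbours C x. y \<noteq> y' \<longrightarrow> set (pis x y) \<inter> set (pis x y') = {cen x})"
      if "y \<in> neighbours C x" for y using pis x(1) that by blast
    have yC: "y \<in> verts C" "y \<noteq> x" if "y \<in> neighbours C x" for y
      using that graph_adj[OF gC] unfolding neighbours_def by auto
    have rho: "Q y (rho y)" if y: "y \<in> neighbours C x" for y
    proof -
      obtain b where b: "b \<in> B y" "adj G0 (last (pis x y)) b" using pisx[OF y] unfolding T_def by blast
      have "reach G0 (B y) b (cen y)" using modelD(3)[OF mB yC(1)[OF y]] b(1) cenB[OF yC(1)[OF y]] unfolding conn_def by blast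
      then obtain r where "is_path G0 r" "hd r = b" "last r = cen y" "set r \<subseteq> B y"
        using reach_path[OF _ modelD(2)[OF mB yC(1)[OF y]]] by blast
      then have "Q y r" unfolding Q_def using b by simp
      then show ?thesis unfolding rho_def by (rule someI)
    qed
    define \<gamma> where "\<gamma> = (\<lambda>u. pis x (inv_into (verts C) cen u) @ rho (inv_into (verts C) cen u))"
    have nbC': "neighbours C' v = cen ` neighbours C x" using R(5)[OF x(1)] x(2) by simp
    have ginv: "inv_into (verts C) cen (cen y) = y" if "y \<in> neighbours C x" for y
      using inv_into_f_f[OF R(1) yC(1)[OF that]] .
    have disjB: "B p \<inter> B q = {}" if "p \<in> verts C" "q \<in> verts C" "p \<noteq> q" for p q using modelD(4)[OF mB that] .
    have path: "is_path G (pis x y @ rho y) \<and> hd (pis x y @ rho y) = cen x \<and> last (pis x y @ rho y) = cen y"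
      if y: "y \<in> neighbours C x" for y
    proof -
      have p: "is_path G0 (pis x y)" "hd (pis x y) = cen x" "set (pis x y) \<subseteq> B x" using pisx[OF y] by auto
      have r: "is_path G0 (rho y)" "adj G0 (last (pis x y)) (hd (rho y))" "last (rho y) = cen y" "set (rho y) \<subseteq> B y"
        using rho[OF y] unfolding Q_def by auto
      have yy: "y \<in> verts C" "x \<noteq> y" using yC[OF y] by auto
      have d: "set (pis x y) \<inter> set (rho y) = {}" using p(3) r(4) disjB[OF x(1) yy(1) yy(2)] by blast
      have "is_path G0 (pis x y @ rho y)" by (rule is_path_append[OF p(1) r(1) r(2) d])
      then have "is_path G (pis x y @ rho y)" by (rule is_path_mono) (use vG0 eG0 E0sub in auto)
      moreover have "pis x y \<noteq> []" "rho y \<noteq> []" using p(1) r(1) unfolding is_path_def by auto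
      ultimately show ?thesis using p(2) r(3) by simp
    qed
    show ?thesis
      unfolding disjoint_paths_property_def
    proof (intro exI[of _ \<gamma>] conjI ballI impI)
      fix u assume "u \<in> neighbours C' v"
      then obtain y where y: "y \<in> neighbours C x" "u = cen y" using nbC' by auto
      have "\<gamma> u = pis x y @ rho y" unfolding \<gamma>_def using ginv[OF y(1)] y(2) by simp
      then show "is_path G (\<gamma> u)" "hd (\<gamma> u) = v" "last (\<gamma> u) = u" using path[OF y(1)] x(2) y(2) by auto
    next
      fix u u' assume u: "u \<in> neighbours C' v" and u': "u' \<in> neighbours C' v" and uu: "u \<noteq> u'"
      obtain y where y: "y \<in> neighbours C x" "u = cen y" using u nbC' by auto
      obtain y' where y': "y' \<in> neighbours C x" "u' = cen y'" using u' nbC' by auto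
      have yy: "y \<noteq> y'" using uu y y' by auto
      have g1: "\<gamma> u = pis x y @ rho y" unfolding \<gamma>_def using ginv[OF y(1)] y(2) by simp
      have g2: "\<gamma> u' = pis x y' @ rho y'" unfolding \<gamma>_def using ginv[OF y'(1)] y'(2) by simp
      have i1: "set (pis x y) \<inter> set (pis x y') = {cen x}" using pisx[OF y(1)] y'(1) yy by blast
      have s1: "set (pis x y) \<subseteq> B x" "set (pis x y') \<subseteq> B x" using pisx[OF y(1)] pisx[OF y'(1)] by auto
      have s2: "set (rho y) \<subseteq> B y" "set (rho y') \<subseteq> B y'" using rho[OF y(1)] rho[OF y'(1)] unfolding Q_def by auto
      have v1: "y \<in> verts C" "x \<noteq> y" using yC[OF y(1)] by auto
      have v2: "y' \<in> verts C" "x \<noteq> y'" using yC[OF y'(1)] by auto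
      have d1: "B x \<inter> B y = {}" using disjB[OF x(1) v1(1) v1(2)] .
      have d2: "B x \<inter> B y' = {}" using disjB[OF x(1) v2(1) v2(2)] .
      have d3: "B y \<inter> B y' = {}" using disjB[OF v1(1) v2(1) yy] .
      have "(set (pis x y) \<union> set (rho y)) \<inter> (set (pis x y') \<union> set (rho y')) = {cen x}"
        by (rule set4[OF i1 s1 s2 d1 d2 d3])
      then show "set (\<gamma> u) \<inter> set (\<gamma> u') = {v}" using g1 g2 x(2) by simp
    qed
  qed
  show ?thesis using core' iso dpp by blast
qed


end
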